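(* Fix $k\in\mathbb{N}$, positive constants $b_0,b_1,b_2,\lambda_0,\lambda_1$ and $\mu\in(0,1)$. There exists $C>0$ depending only on $b_0,b_1,b_2,\lambda_0,\lambda_1,\mu$ (and the fixed $k$) such that the following holds. Let $T\geq10$, $\ell<r$, $a^\pm\in\mathbb{R}^k$, $g:[\ell,r]\to\mathbb{R}$ Lipschitz with $g(\ell)=g(r)=0$, and $P\subset(\ell,r)$ finite, with $P'=P\cap[\ell+T^{1/2},r-T^{1/2}]$ non-empty. Suppose that $r-\ell\leq b_0T$, $|P|\leq b_0T$, $|g(x)-g(y)|\leq b_1T|x-y|$ for all $x,y$, $a^\pm_j-a^\pm_{j+1}\geq\lambda_0T^{1/2}$ for $j\in\{1,\dots,k-1\}$, $a^-_k-g(\ell)\geq\lambda_1T$, $a^+_k-g(r)\geq\lambda_1T$, $a^-_1-g(\ell)\leq b_2T^2$, $a^+_1-g(r)\leq b_2T^2$. Then $\mathbb{P}_{\mathcal{L}'_+}(\mathsf{G})\geq C^{-1}e^{-CT^{5/2}}$.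
   Context: $\mathbb{P}_{\mathrm{free}}$ is the law of $k$ independent Brownian bridges (diffusion parameter one) $\mathcal{L}=(\mathcal{L}_1,\dots,\mathcal{L}_k)$ on $[\ell,r]$ with $\mathcal{L}_j(\ell)=a^-_j$, $\mathcal{L}_j(r)=a^+_j$. $W'_+(\mathcal{L})=1$ if for all $p\in P'$ one has $\mathcal{L}_k(p)>g(p)$ and $\mathcal{L}_j(p)>\mathcal{L}_{j+1}(p)$ for all $j\in\{1,\dots,k-1\}$, and $0$ otherwise; $\mathbb{P}_{\mathcal{L}'_+}$ is given by $d\mathbb{P}_{\mathcal{L}'_+}/d\mathbb{P}_{\mathrm{free}}=W'_+/\mathbb{E}_{\mathrm{free}}[W'_+]$. $\mathsf{G}$ is the event that $\mathcal{L}_j(p)-\mathcal{L}_{j+1}(p)\geq\frac{1+\mu}{2}\lambda_0T^{1/2}$ for all $p\in P'$ and $j\in\{1,\dots,k-1\}$, and $\mathcal{L}_k(p)-g(p)\geq\frac{1+\mu}{2}\lambda_1T$ for all $p\in P'$. *)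

theory Defs
  imports "HOL-Probability.Probability"
begin

text \<open>All events in the statement
depend only on the values of the curves at the finitely many times in P'. We therefore
describe the free law through its finite-dimensional marginal on the index set
{1..k} x S (S = P'), which is given by the standard Brownian-bridge density: the
product of Gaussian heat kernels along consecutive times, divided by the heat kernel
between the endpoints.\<close>

definition heat_kernel :: "real \<Rightarrow> real \<Rightarrow> real" where
  "heat_kernel t x = exp (- (x ^ 2) / (2 * t)) / sqrt (2 * pi * t)"

definition chain_dens :: "real list \<Rightarrow> real list \<Rightarrow> real" where
  "chain_dens tt vv = (\<Prod>i<length tt - 1. heat_kernel (tt ! Suc i - tt ! i) (vv ! Suc i - vv ! i))"

text \<open>Joint density at the (sorted) times ts in (l,r) of a Brownian bridge with diffusion
parameter one from (l,a) to (r,b).\<close>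
definition bridge_dens :: "real \<Rightarrow> real \<Rightarrow> real \<Rightarrow> real \<Rightarrow> real list \<Rightarrow> (real \<Rightarrow> real) \<Rightarrow> real" where
  "bridge_dens l r a b ts f =
     chain_dens (l # ts @ [r]) (a # map f ts @ [b]) / heat_kernel (r - l) (b - a)"

text \<open>Configurations: y (j,p) is the value of the j-th curve at time p.\<close>
definition config_space :: "nat \<Rightarrow> real set \<Rightarrow> ((nat \<times> real) \<Rightarrow> real) measure" where
  "config_space k S = PiM ({1..k} \<times> S) (\<lambda>_. lborel)"

definition free_dens :: "nat \<Rightarrow> real \<Rightarrow> real \<Rightarrow> (nat \<Rightarrow> real) \<Rightarrow> (nat \<Rightarrow> real) \<Rightarrow> real set
    \<Rightarrow> ((nat \<times> real) \<Rightarrow> real) \<Rightarrow> real" where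
  "free_dens k l r am ap S y =
     (\<Prod>j\<in>{1..k}. bridge_dens l r (am j) (ap j) (sorted_list_of_set S) (\<lambda>t. y (j, t)))"

definition P_free :: "nat \<Rightarrow> real \<Rightarrow> real \<Rightarrow> (nat \<Rightarrow> real) \<Rightarrow> (nat \<Rightarrow> real) \<Rightarrow> real set
    \<Rightarrow> ((nat \<times> real) \<Rightarrow> real) set \<Rightarrow> ennreal" where
  "P_free k l r am ap S E =
     (\<integral>\<^sup>+ y. ennreal (free_dens k l r am ap S y) * indicator E y \<partial>config_space k S)"

definition W_event :: "nat \<Rightarrow> (real \<Rightarrow> real) \<Rightarrow> real set \<Rightarrow> ((nat \<times> real) \<Rightarrow> real) set" where
  "W_event k g S = {y. \<forall>p\<in>S. y (k, p) > g p \<and> (\<forall>j\<in>{1..k-1}. y (j, p) > y (j+1, p))}"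

definition G_event :: "nat \<Rightarrow> real \<Rightarrow> real \<Rightarrow> real \<Rightarrow> real \<Rightarrow> (real \<Rightarrow> real) \<Rightarrow> real set
    \<Rightarrow> ((nat \<times> real) \<Rightarrow> real) set" where
  "G_event k \<mu> lam0 lam1 T g S = {y. \<forall>p\<in>S.
      (\<forall>j\<in>{1..k-1}. y (j, p) - y (j+1, p) \<ge> (1 + \<mu>) / 2 * lam0 * sqrt T)
      \<and> y (k, p) - g p \<ge> (1 + \<mu>) / 2 * lam1 * T}"

definition P_cond :: "nat \<Rightarrow> real \<Rightarrow> real \<Rightarrow> (nat \<Rightarrow> real) \<Rightarrow> (nat \<Rightarrow> real) \<Rightarrow> (real \<Rightarrow> real)
    \<Rightarrow> real set \<Rightarrow> ((nat \<times> real) \<Rightarrow> real) set \<Rightarrow> ennreal" where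
  "P_cond k l r am ap g S E =
     P_free k l r am ap S (E \<inter> W_event k g S) / P_free k l r am ap S (W_event k g S)"

end

theory Submission
  imports Defs
begin


lemma prodJ:
  fixes f :: "nat \<Rightarrow> real \<Rightarrow> ennreal" and s :: real
  assumes "\<And>j. j \<in> {1..k} \<Longrightarrow> f j \<in> borel_measurable borel"
  shows "(\<integral>\<^sup>+w. (\<Prod>j\<in>{1..k}. f j (w (j,s))) \<partial>PiM ({1..k}\<times>{s}) (\<lambda>_. lborel))
       = (\<Prod>j\<in>{1..k}. \<integral>\<^sup>+z. f j z \<partial>lborel)"
proof -
  interpret product_sigma_finite "\<lambda>_::nat\<times>real. lborel::real measure" by standard
  have im: "{1..k}\<times>{s} = (\<lambda>j. (j,s)) ` {1..k}" by auto
  have e: "\<And>w. (\<Prod>j\<in>{1..k}. f j (w (j,s))) = (\<Prod>i\<in>{1..k}\<times>{s}. f (fst i) (w i))"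
    unfolding im by (subst prod.reindex) (auto simp: inj_on_def)
  have "(\<integral>\<^sup>+w. (\<Prod>i\<in>{1..k}\<times>{s}. f (fst i) (w i)) \<partial>PiM ({1..k}\<times>{s}) (\<lambda>_. lborel))
      = (\<Prod>i\<in>{1..k}\<times>{s}. \<integral>\<^sup>+z. f (fst i) z \<partial>lborel)"
    using product_nn_integral_prod[of "{1..k}\<times>{s}" "\<lambda>i. f (fst i)"] assms by auto
  also have "\<dots> = (\<Prod>j\<in>{1..k}. \<integral>\<^sup>+z. f j z \<partial>lborel)"
    unfolding im by (subst prod.reindex) (auto simp: inj_on_def)
  finally show ?thesis by (simp only: e)
qed

lemma stepI:
  fixes F :: "((nat\<times>real) \<Rightarrow> real) \<Rightarrow> ennreal"
    and K :: "nat \<Rightarrow> ((nat\<times>real) \<Rightarrow> real) \<Rightarrow> real \<Rightarrow> ennreal"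
  assumes fin: "finite I" and disj: "\<And>j. (j,s) \<notin> I"
   and Fm: "F \<in> borel_measurable (PiM I (\<lambda>_. lborel))"
   and Fr: "\<And>y. F y = F (restrict y I)"
   and Km: "\<And>j. j\<in>{1..k} \<Longrightarrow> (\<lambda>(x,z). K j x z) \<in> borel_measurable (PiM I (\<lambda>_. lborel) \<Otimes>\<^sub>M borel)"
  shows "(\<integral>\<^sup>+y. F y * (\<Prod>j\<in>{1..k}. K j (restrict y I) (y (j,s))) \<partial>PiM (I \<union> {1..k}\<times>{s}) (\<lambda>_. lborel))
        = (\<integral>\<^sup>+x. F x * (\<Prod>j\<in>{1..k}. \<integral>\<^sup>+z. K j x z \<partial>lborel) \<partial>PiM I (\<lambda>_. lborel))"
proof -
  interpret product_sigma_finite "\<lambda>_::nat\<times>real. lborel::real measure" by standard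
  let ?J = "{1..k}\<times>{s}"
  have IJ: "I \<inter> ?J = {}" using disj by auto
  have finJ: "finite ?J" by simp
  have rm: "(\<lambda>y. restrict y I) \<in> measurable (PiM (I \<union> ?J) (\<lambda>_. lborel)) (PiM I (\<lambda>_. lborel))"
    by (rule measurable_restrict_subset) auto
  have Gm: "(\<lambda>y. F y * (\<Prod>j\<in>{1..k}. K j (restrict y I) (y (j,s)))) \<in> borel_measurable (PiM (I \<union> ?J) (\<lambda>_. lborel))"
  proof -
    have "(\<lambda>y. F (restrict y I)) \<in> borel_measurable (PiM (I \<union> ?J) (\<lambda>_. lborel))"
      using measurable_comp[OF rm Fm] by (simp add: comp_def)
    then have a: "F \<in> borel_measurable (PiM (I \<union> ?J) (\<lambda>_. lborel))"
      by (subst (asm) Fr[symmetric]) simp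
    have b: "(\<lambda>y. K j (restrict y I) (y (j,s))) \<in> borel_measurable (PiM (I \<union> ?J) (\<lambda>_. lborel))"
      if "j \<in> {1..k}" for j
    proof (rule measurable_Pair_compose_split[OF Km[OF that] rm])
      show "(\<lambda>y. y (j, s)) \<in> measurable (PiM (I \<union> ?J) (\<lambda>_. lborel)) borel"
        using that by (intro measurable_component_singleton[THEN measurable_compose[where L=borel]]) (auto)
    qed
    show ?thesis using a b by (intro borel_measurable_times_ennreal borel_measurable_prod_ennreal) auto
  qed
  have "(\<integral>\<^sup>+y. F y * (\<Prod>j\<in>{1..k}. K j (restrict y I) (y (j,s))) \<partial>PiM (I \<union> ?J) (\<lambda>_. lborel))
     = (\<integral>\<^sup>+x. (\<integral>\<^sup>+w. F (merge I ?J (x,w)) * (\<Prod>j\<in>{1..k}. K j (restrict (merge I ?J (x,w)) I) (merge I ?J (x,w) (j,s))) \<partial>PiM ?J (\<lambda>_. lborel)) \<partial>PiM I (\<lambda>_. lborel))"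
    by (rule product_nn_integral_fold[OF IJ fin finJ Gm])
  also have "\<dots> = (\<integral>\<^sup>+x. F x * (\<Prod>j\<in>{1..k}. \<integral>\<^sup>+z. K j x z \<partial>lborel) \<partial>PiM I (\<lambda>_. lborel))"
  proof (rule nn_integral_cong)
    fix x :: "(nat\<times>real) \<Rightarrow> real" assume x: "x \<in> space (PiM I (\<lambda>_. lborel))"
    have rx: "restrict (merge I ?J (x,w)) I = x" for w
      using x by (auto simp: merge_def restrict_def space_PiM PiE_def extensional_def fun_eq_iff)
    have mw: "merge I ?J (x,w) (j,s) = w (j,s)" if "j \<in> {1..k}" for w j
      using disj that by (auto simp: merge_def)
    have Kx: "K j x \<in> borel_measurable borel" if "j \<in> {1..k}" for j
      using measurable_Pair_compose_split[OF Km[OF that] measurable_const[OF x] measurable_ident]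
      by simp
    have "(\<integral>\<^sup>+w. F (merge I ?J (x,w)) * (\<Prod>j\<in>{1..k}. K j (restrict (merge I ?J (x,w)) I) (merge I ?J (x,w) (j,s))) \<partial>PiM ?J (\<lambda>_. lborel))
        = (\<integral>\<^sup>+w. F x * (\<Prod>j\<in>{1..k}. K j x (w (j,s))) \<partial>PiM ?J (\<lambda>_. lborel))"
    proof (rule nn_integral_cong)
      fix w :: "(nat\<times>real) \<Rightarrow> real"
      have Fx: "F (merge I ?J (x,w)) = F x" by (metis Fr rx)
      show "F (merge I ?J (x,w)) * (\<Prod>j\<in>{1..k}. K j (restrict (merge I ?J (x,w)) I) (merge I ?J (x,w) (j,s)))
         = F x * (\<Prod>j\<in>{1..k}. K j x (w (j,s)))"
        unfolding Fx rx using mw[of _ w] by (intro arg_cong2[where f="(*)"] refl prod.cong) presburger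
    qed
    also have "\<dots> = F x * (\<integral>\<^sup>+w. (\<Prod>j\<in>{1..k}. K j x (w (j,s))) \<partial>PiM ?J (\<lambda>_. lborel))"
    proof (rule nn_integral_cmult)
      show "(\<lambda>w. \<Prod>j\<in>{1..k}. K j x (w (j, s))) \<in> borel_measurable (PiM ?J (\<lambda>_. lborel))"
        using Kx by (intro borel_measurable_prod_ennreal measurable_compose[OF measurable_component_singleton]) auto
    qed
    also have "\<dots> = F x * (\<Prod>j\<in>{1..k}. \<integral>\<^sup>+z. K j x z \<partial>lborel)"
      using prodJ[of k "\<lambda>j. K j x" s] Kx by simp
    finally show "(\<integral>\<^sup>+w. F (merge I ?J (x,w)) * (\<Prod>j\<in>{1..k}. K j (restrict (merge I ?J (x,w)) I) (merge I ?J (x,w) (j,s))) \<partial>PiM ?J (\<lambda>_. lborel))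
        = F x * (\<Prod>j\<in>{1..k}. \<integral>\<^sup>+z. K j x z \<partial>lborel)" .
  qed
  finally show ?thesis .
qed

definition chainF :: "nat \<Rightarrow> real list \<Rightarrow> (nat \<Rightarrow> real \<Rightarrow> ennreal)
   \<Rightarrow> (nat \<Rightarrow> nat \<Rightarrow> real \<Rightarrow> real \<Rightarrow> ennreal) \<Rightarrow> nat \<Rightarrow> ((nat\<times>real) \<Rightarrow> real) \<Rightarrow> ennreal" where
  "chainF k ts q K m y = (\<Prod>j\<in>{1..k}. q j (y (j, ts!0)) * (\<Prod>i\<in>{1..<m}. K j i (y (j, ts!(i-1))) (y (j, ts!i))))"

lemma nth_in_take: "i < m \<Longrightarrow> m \<le> length ts \<Longrightarrow> ts ! i \<in> set (take m ts)"
  using nth_mem[of i "take m ts"] by simp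

lemma chainF_restrict:
  assumes "1 \<le> m" "m \<le> length ts"
  shows "chainF k ts q K m (restrict y ({1..k} \<times> set (take m ts))) = chainF k ts q K m y"
  unfolding chainF_def
proof (intro prod.cong refl arg_cong2[where f="(*)"])
  fix j assume j: "j \<in> {1..k}"
  show "q j (restrict y ({1..k} \<times> set (take m ts)) (j, ts ! 0)) = q j (y (j, ts ! 0))"
    using j nth_in_take[of 0 m ts] assms by simp
  fix i assume i: "i \<in> {1..<m}"
  show "K j i (restrict y ({1..k} \<times> set (take m ts)) (j, ts ! (i - 1))) (restrict y ({1..k} \<times> set (take m ts)) (j, ts ! i))
      = K j i (y (j, ts ! (i - 1))) (y (j, ts ! i))"
  proof -
    have "ts!(i-1) \<in> set (take m ts)" "ts!i \<in> set (take m ts)" using i assms by (auto intro!: nth_in_take)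
    then show ?thesis using j by simp
  qed
qed

lemma chainF_meas:
  assumes "1 \<le> m" "m \<le> length ts"
    and qm: "\<And>j. q j \<in> borel_measurable borel"
    and Km: "\<And>j i. (\<lambda>(x,z). K j i x z) \<in> borel_measurable (borel \<Otimes>\<^sub>M borel)"
  shows "chainF k ts q K m \<in> borel_measurable (PiM ({1..k} \<times> set (take m ts)) (\<lambda>_. lborel))"
proof -
  let ?M = "PiM ({1..k} \<times> set (take m ts)) (\<lambda>_. lborel)"
  have c: "(\<lambda>y. y (j, ts!i)) \<in> borel_measurable ?M" if "j \<in> {1..k}" "i < m" for j i
    using that assms nth_in_take[of i m ts]
    by (intro measurable_component_singleton[THEN measurable_compose[where L=borel]]) auto
  show ?thesis unfolding chainF_def
  proof (intro borel_measurable_prod_ennreal borel_measurable_times_ennreal)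
    fix j assume j: "j \<in> {1..k}"
    show "(\<lambda>y. q j (y (j, ts ! 0))) \<in> borel_measurable ?M"
      using measurable_compose[OF c[OF j] qm] assms by simp
    fix i assume i: "i \<in> {1..<m}"
    show "(\<lambda>y. K j i (y (j, ts ! (i - 1))) (y (j, ts ! i))) \<in> borel_measurable ?M"
      using i by (intro measurable_Pair_compose_split[OF Km c[OF j] c[OF j]]) auto
  qed
qed

lemma chainF_Suc:
  assumes "1 \<le> m"
  shows "chainF k ts q K (Suc m) y = chainF k ts q K m y * (\<Prod>j\<in>{1..k}. K j m (y (j, ts!(m-1))) (y (j, ts!m)))"
proof -
  have "{1..<Suc m} = insert m {1..<m}" using assms by auto
  then show ?thesis unfolding chainF_def prod.distrib[symmetric]
    by (intro prod.cong refl) (simp add: mult.assoc mult.commute mult.left_commute)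
qed

lemma take_Suc_set:
  assumes "m < length ts"
  shows "{1..k} \<times> set (take (Suc m) ts) = {1..k} \<times> set (take m ts) \<union> {1..k} \<times> {ts!m}"
  using assms by (auto simp: take_Suc_conv_app_nth)

lemma distinct_notin_take:
  assumes "distinct ts" "m < length ts"
  shows "ts ! m \<notin> set (take m ts)"
proof -
  have "distinct (take (Suc m) ts)" using assms by simp
  then show ?thesis using assms by (simp add: take_Suc_conv_app_nth)
qed

lemma step_chain:
  assumes dist: "distinct ts" and m: "1 \<le> m" "m < length ts"
    and qm: "\<And>j. q j \<in> borel_measurable borel"
    and Km: "\<And>j i. (\<lambda>(x,z). K j i x z) \<in> borel_measurable (borel \<Otimes>\<^sub>M borel)"
  shows "(\<integral>\<^sup>+y. chainF k ts q K (Suc m) y \<partial>PiM ({1..k} \<times> set (take (Suc m) ts)) (\<lambda>_. lborel))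
       = (\<integral>\<^sup>+x. chainF k ts q K m x * (\<Prod>j\<in>{1..k}. \<integral>\<^sup>+z. K j m (x (j, ts!(m-1))) z \<partial>lborel)
            \<partial>PiM ({1..k} \<times> set (take m ts)) (\<lambda>_. lborel))"
proof -
  let ?I = "{1..k} \<times> set (take m ts)"
  have e: "chainF k ts q K (Suc m) y = chainF k ts q K m y *
      (\<Prod>j\<in>{1..k}. (\<lambda>x z. K j m (x (j, ts!(m-1))) z) (restrict y ?I) (y (j, ts!m)))" for y
    unfolding chainF_Suc[OF m(1)] using m nth_in_take[of "m-1" m ts]
    by (intro arg_cong2[where f="(*)"] refl prod.cong) auto
  have "(\<integral>\<^sup>+y. chainF k ts q K (Suc m) y \<partial>PiM ({1..k} \<times> set (take (Suc m) ts)) (\<lambda>_. lborel))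
      = (\<integral>\<^sup>+y. chainF k ts q K m y *
      (\<Prod>j\<in>{1..k}. (\<lambda>x z. K j m (x (j, ts!(m-1))) z) (restrict y ?I) (y (j, ts!m))) \<partial>PiM (?I \<union> {1..k} \<times> {ts!m}) (\<lambda>_. lborel))"
    unfolding take_Suc_set[OF m(2)] e ..
  also have "\<dots> = (\<integral>\<^sup>+x. chainF k ts q K m x * (\<Prod>j\<in>{1..k}. \<integral>\<^sup>+z. K j m (x (j, ts!(m-1))) z \<partial>lborel)
            \<partial>PiM ?I (\<lambda>_. lborel))"
  proof (rule stepI)
    show "finite ?I" by simp
    show "\<And>j. (j, ts ! m) \<notin> ?I" using distinct_notin_take[OF dist m(2)] by auto
    show "chainF k ts q K m \<in> borel_measurable (PiM ?I (\<lambda>_. lborel))"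
      using chainF_meas[OF m(1) _ qm Km] m by simp
    show "\<And>y. chainF k ts q K m y = chainF k ts q K m (restrict y ?I)"
      using chainF_restrict[OF m(1)] m by simp
    fix j assume j: "j \<in> {1..k}"
    have c: "(\<lambda>x. x (j, ts!(m-1))) \<in> borel_measurable (PiM ?I (\<lambda>_. lborel))"
      using m nth_in_take[of "m-1" m ts] j
      by (intro measurable_component_singleton[THEN measurable_compose[where L=borel]]) auto
    show "(\<lambda>(x,z). K j m (x (j, ts!(m-1))) z) \<in> borel_measurable (PiM ?I (\<lambda>_. lborel) \<Otimes>\<^sub>M borel)"
      using measurable_Pair_compose_split[OF Km measurable_compose[OF measurable_fst c] measurable_snd]
      by (simp add: case_prod_beta')
  qed
  finally show ?thesis .
qed

lemma base_chain:
  assumes "1 \<le> length ts"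
    and qm: "\<And>j. q j \<in> borel_measurable borel"
  shows "(\<integral>\<^sup>+y. chainF k ts q K 1 y \<partial>PiM ({1..k} \<times> set (take 1 ts)) (\<lambda>_. lborel))
       = (\<Prod>j\<in>{1..k}. \<integral>\<^sup>+z. q j z \<partial>lborel)"
proof -
  have t: "set (take 1 ts) = {ts!0}" using assms by (cases ts) auto
  show ?thesis unfolding t chainF_def using prodJ[of k q "ts!0"] qm by simp
qed

lemma chain_upper:
  assumes dist: "distinct ts" and m: "1 \<le> m" "m \<le> length ts"
    and qm: "\<And>j. q j \<in> borel_measurable borel"
    and Km: "\<And>j i. (\<lambda>(x,z). K j i x z) \<in> borel_measurable (borel \<Otimes>\<^sub>M borel)"
    and K1: "\<And>j i x. (\<integral>\<^sup>+z. K j i x z \<partial>lborel) \<le> 1"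
  shows "(\<integral>\<^sup>+y. chainF k ts q K m y \<partial>PiM ({1..k} \<times> set (take m ts)) (\<lambda>_. lborel))
       \<le> (\<Prod>j\<in>{1..k}. \<integral>\<^sup>+z. q j z \<partial>lborel)"
  using m
proof (induction m)
  case 0 then show ?case by simp
next
  case (Suc m)
  show ?case
  proof (cases "m = 0")
    case True
    then show ?thesis using base_chain[OF _ qm, where ts=ts and k=k and K=K] Suc by simp
  next
    case False
    have "(\<integral>\<^sup>+y. chainF k ts q K (Suc m) y \<partial>PiM ({1..k} \<times> set (take (Suc m) ts)) (\<lambda>_. lborel))
       = (\<integral>\<^sup>+x. chainF k ts q K m x * (\<Prod>j\<in>{1..k}. \<integral>\<^sup>+z. K j m (x (j, ts!(m-1))) z \<partial>lborel)
            \<partial>PiM ({1..k} \<times> set (take m ts)) (\<lambda>_. lborel))"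
      using step_chain[OF dist _ _ qm Km] False Suc by simp
    also have "\<dots> \<le> (\<integral>\<^sup>+x. chainF k ts q K m x * 1 \<partial>PiM ({1..k} \<times> set (take m ts)) (\<lambda>_. lborel))"
      by (intro nn_integral_mono mult_left_mono prod_le_1) (auto simp: K1)
    also have "\<dots> \<le> (\<Prod>j\<in>{1..k}. \<integral>\<^sup>+z. q j z \<partial>lborel)"
      using Suc False by simp
    finally show ?thesis .
  qed
qed

lemma chain_lower:
  assumes dist: "distinct ts" and m: "1 \<le> m" "m \<le> length ts"
    and qm: "\<And>j. q j \<in> borel_measurable borel"
    and Km: "\<And>j i. (\<lambda>(x,z). K j i x z) \<in> borel_measurable (borel \<Otimes>\<^sub>M borel)"
    and qB: "\<And>j z. q j z \<noteq> 0 \<Longrightarrow> z \<in> B j"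
    and KB: "\<And>j i x z. K j i x z \<noteq> 0 \<Longrightarrow> z \<in> B j"
    and Kb: "\<And>j i x. j \<in> {1..k} \<Longrightarrow> x \<in> B j \<Longrightarrow> (\<integral>\<^sup>+z. K j i x z \<partial>lborel) \<ge> \<beta>"
  shows "(\<integral>\<^sup>+y. chainF k ts q K m y \<partial>PiM ({1..k} \<times> set (take m ts)) (\<lambda>_. lborel))
       \<ge> (\<Prod>j\<in>{1..k}. \<integral>\<^sup>+z. q j z \<partial>lborel) * \<beta> ^ (k * (m - 1))"
  using m
proof (induction m)
  case 0 then show ?case by simp
next
  case (Suc m)
  show ?case
  proof (cases "m = 0")
    case True
    then show ?thesis using base_chain[OF _ qm, where ts=ts and k=k and K=K] Suc by simp
  next
    case False
    have inB: "x (j, ts!(m-1)) \<in> B j" if "chainF k ts q K m x \<noteq> 0" "j \<in> {1..k}" for x j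
    proof -
      have "q j (x (j, ts!0)) * (\<Prod>i\<in>{1..<m}. K j i (x (j, ts!(i-1))) (x (j, ts!i))) \<noteq> 0"
        using that unfolding chainF_def by (simp add: prod_zero_iff)
      then have a: "q j (x (j, ts!0)) \<noteq> 0" and b: "\<And>i. i \<in> {1..<m} \<Longrightarrow> K j i (x (j, ts!(i-1))) (x (j, ts!i)) \<noteq> 0"
        by (auto simp: prod_zero_iff)
      show ?thesis
      proof (cases "m = 1")
        case True then show ?thesis using qB[OF a] by simp
      next
        case F: False
        then show ?thesis using KB[OF b[of "m-1"]] False F by simp
      qed
    qed
    have "(\<Prod>j\<in>{1..k}. \<integral>\<^sup>+z. q j z \<partial>lborel) * \<beta> ^ (k * (Suc m - 1))
        = ((\<Prod>j\<in>{1..k}. \<integral>\<^sup>+z. q j z \<partial>lborel) * \<beta> ^ (k * (m - 1))) * \<beta> ^ k"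
    proof -
      have "k * (Suc m - 1) = k * (m - 1) + k" using False by (cases m) auto
      then show ?thesis by (simp only: power_add mult_ac)
    qed
    also have "\<dots> \<le> (\<integral>\<^sup>+y. chainF k ts q K m y \<partial>PiM ({1..k} \<times> set (take m ts)) (\<lambda>_. lborel)) * \<beta> ^ k"
      using Suc False by (intro mult_right_mono) auto
    also have "\<dots> = (\<integral>\<^sup>+x. chainF k ts q K m x * \<beta> ^ k \<partial>PiM ({1..k} \<times> set (take m ts)) (\<lambda>_. lborel))"
      using chainF_meas[OF _ _ qm Km, of m ts k] Suc False by (subst nn_integral_multc) auto
    also have "\<dots> \<le> (\<integral>\<^sup>+x. chainF k ts q K m x * (\<Prod>j\<in>{1..k}. \<integral>\<^sup>+z. K j m (x (j, ts!(m-1))) z \<partial>lborel)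
            \<partial>PiM ({1..k} \<times> set (take m ts)) (\<lambda>_. lborel))"
    proof (intro nn_integral_mono)
      fix x
      show "chainF k ts q K m x * \<beta> ^ k \<le> chainF k ts q K m x * (\<Prod>j\<in>{1..k}. \<integral>\<^sup>+z. K j m (x (j, ts!(m-1))) z \<partial>lborel)"
      proof (cases "chainF k ts q K m x = 0")
        case True then show ?thesis by simp
      next
        case F: False
        have "\<beta> ^ k = (\<Prod>j\<in>{1..k}. \<beta>)" by simp
        also have "\<dots> \<le> (\<Prod>j\<in>{1..k}. \<integral>\<^sup>+z. K j m (x (j, ts!(m-1))) z \<partial>lborel)"
          by (rule prod_mono_ennreal) (metis Kb inB[OF F])
        finally show ?thesis by (intro mult_left_mono) auto
      qed
    qed
    also have "\<dots> = (\<integral>\<^sup>+y. chainF k ts q K (Suc m) y \<partial>PiM ({1..k} \<times> set (take (Suc m) ts)) (\<lambda>_. lborel))"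
      using step_chain[OF dist _ _ qm Km] False Suc by simp
    finally show ?thesis .
  qed
qed



lemma hk_normal: "t > 0 \<Longrightarrow> heat_kernel t (z - x) = normal_density x (sqrt t) z"
  unfolding heat_kernel_def normal_density_def
  by (simp add: power2_eq_square[symmetric] field_simps)

lemma hk_nonneg: "t > 0 \<Longrightarrow> heat_kernel t x \<ge> 0"
  unfolding heat_kernel_def by simp

lemma hk_int1: "t > 0 \<Longrightarrow> (\<integral>\<^sup>+z. ennreal (heat_kernel t (z - x)) \<partial>lborel) = 1"
  unfolding hk_normal
  by (subst nn_integral_eq_integral) auto

lemma hk_sym: "heat_kernel t (-x) = heat_kernel t x"
  unfolding heat_kernel_def by simp

lemma hk_le1: "t \<ge> 1 \<Longrightarrow> heat_kernel t x \<le> 1"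
proof -
  assume t: "t \<ge> 1"
  have "exp (- (x ^ 2) / (2 * t)) \<le> 1" using t by simp
  moreover have "1 \<le> sqrt (2 * pi * t)"
  proof -
    have "1 * 1 \<le> (2 * pi) * t" using t pi_gt3 by (intro mult_mono) auto
    then show ?thesis by (simp add: real_le_rsqrt)
  qed
  ultimately have "exp (- (x ^ 2) / (2 * t)) \<le> sqrt (2 * pi * t)" by linarith
  moreover have "sqrt (2 * pi * t) > 0" using t by simp
  ultimately show ?thesis unfolding heat_kernel_def
    by (simp add: divide_le_eq)
qed

lemma hk_lower:
  assumes "t > 0" "\<bar>x\<bar> \<le> w"
  shows "heat_kernel t x \<ge> exp (- (w ^ 2) / (2 * t)) / sqrt (2 * pi * t)"
proof -
  have "x ^ 2 \<le> w ^ 2" using assms by (metis abs_ge_zero order_trans power2_abs power_mono)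
  then have "- (w ^ 2) / (2 * t) \<le> - (x ^ 2) / (2 * t)" using assms by (simp add: divide_right_mono)
  then show ?thesis unfolding heat_kernel_def using assms by (intro divide_right_mono) auto
qed

lemma int_interval_lower:
  fixes f :: "real \<Rightarrow> real"
  assumes "u \<le> v" "{u..v} \<subseteq> B" "c \<ge> 0" "\<And>z. z \<in> {u..v} \<Longrightarrow> f z \<ge> c"
  shows "(\<integral>\<^sup>+z. ennreal (f z) * indicator B z \<partial>lborel) \<ge> ennreal (c * (v - u))"
proof -
  have "(\<integral>\<^sup>+z. ennreal c * indicator {u..v} z \<partial>lborel) \<le> (\<integral>\<^sup>+z. ennreal (f z) * indicator B z \<partial>lborel)"
    using assms by (intro nn_integral_mono) (auto intro!: ennreal_leI split: split_indicator)
  moreover have "(\<integral>\<^sup>+z. ennreal c * indicator {u..v} z \<partial>lborel) = ennreal (c * (v - u))"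
    using assms by (simp add: nn_integral_cmult_indicator ennreal_mult)
  ultimately show ?thesis by simp
qed

lemma hk_tail:
  assumes t: "t > 0" and U: "U \<ge> a"
  shows "(\<integral>\<^sup>+z. ennreal (heat_kernel t (z - a)) * indicator {U<..} z \<partial>lborel)
     \<le> ennreal (sqrt 2 * exp (- ((U - a) ^ 2) / (4 * t)))"
proof -
  let ?c = "sqrt 2 * exp (- ((U - a) ^ 2) / (4 * t))"
  have pw: "heat_kernel t (z - a) * indicator {U<..} z \<le> ?c * normal_density a (sqrt (2 * t)) z" for z
  proof (cases "z > U")
    case True
    have "(U - a) ^ 2 \<le> (z - a) ^ 2" using True U by (intro power_mono) auto
    then have e: "- ((z - a) ^ 2) / (2 * t) \<le> - ((U - a) ^ 2) / (4 * t) + - ((z - a) ^ 2) / (4 * t)"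
      using t by (simp add: field_simps)
    have "heat_kernel t (z - a) = exp (- ((z - a) ^ 2) / (2 * t)) / sqrt (2 * pi * t)"
      unfolding heat_kernel_def ..
    also have "\<dots> \<le> exp (- ((U - a) ^ 2) / (4 * t) + - ((z - a) ^ 2) / (4 * t)) / sqrt (2 * pi * t)"
      using e t by (intro divide_right_mono) auto
    also have "\<dots> = ?c * normal_density a (sqrt (2 * t)) z"
    proof -
      have s2: "(sqrt (2 * t))\<^sup>2 = 2 * t" using t by simp
      have s3: "sqrt (2 * pi * (2 * t)) = sqrt 2 * sqrt (2 * pi * t)"
        by (simp add: real_sqrt_mult[symmetric] mult_ac)
      have nd: "normal_density a (sqrt (2*t)) z = exp (- ((z - a)^2) / (4*t)) / (sqrt 2 * sqrt (2*pi*t))"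
        unfolding normal_density_def s2 s3 by (simp add: mult_ac)
      show ?thesis unfolding nd exp_add by (simp add: field_simps)
    qed
    finally show ?thesis using True by simp
  next
    case False
    then show ?thesis using t by (simp add: normal_density_nonneg)
  qed
  have "(\<integral>\<^sup>+z. ennreal (heat_kernel t (z - a)) * indicator {U<..} z \<partial>lborel)
      \<le> (\<integral>\<^sup>+z. ennreal ?c * ennreal (normal_density a (sqrt (2 * t)) z) \<partial>lborel)"
  proof (intro nn_integral_mono)
    fix z
    have "ennreal (heat_kernel t (z - a)) * indicator {U<..} z = ennreal (heat_kernel t (z - a) * indicator {U<..} z)"
      by (simp split: split_indicator)
    also have "\<dots> \<le> ennreal (?c * normal_density a (sqrt (2 * t)) z)" using pw by (intro ennreal_leI)
    also have "\<dots> = ennreal ?c * ennreal (normal_density a (sqrt (2 * t)) z)"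
      by (simp add: ennreal_mult)
    finally show "ennreal (heat_kernel t (z - a)) * indicator {U<..} z \<le> ennreal ?c * ennreal (normal_density a (sqrt (2 * t)) z)" .
  qed
  also have "\<dots> = ennreal ?c * (\<integral>\<^sup>+z. ennreal (normal_density a (sqrt (2 * t)) z) \<partial>lborel)"
    by (rule nn_integral_cmult) measurable
  also have "(\<integral>\<^sup>+z. ennreal (normal_density a (sqrt (2 * t)) z) \<partial>lborel) = 1"
    using t by (subst nn_integral_eq_integral) auto
  finally show ?thesis by simp
qed

lemma hk_step_lower:
  assumes x: "x \<in> {H..H+1}" and d: "0 < \<delta>" "\<delta> \<le> D" and D: "1 \<le> D"
  shows "(\<integral>\<^sup>+z. ennreal (heat_kernel \<delta> (z - x)) * indicator {H..H+1} z \<partial>lborel)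
      \<ge> ennreal (exp (- 1 / 2) / (2 * sqrt (2 * pi * D)))"
proof (cases "\<delta> \<le> 1")
  case True
  define w where "w = sqrt \<delta> / 2"
  have w0: "w > 0" "w \<le> 1/2" using d True by (auto simp: w_def)
  have ww: "w ^ 2 = \<delta> / 4" using d by (simp add: w_def power_divide)
  have hb: "heat_kernel \<delta> (z - x) \<ge> exp (- 1 / 2) / sqrt (2 * pi * \<delta>)" if "\<bar>z - x\<bar> \<le> w" for z
  proof -
    have "exp (- 1 / 2) / sqrt (2 * pi * \<delta>) \<le> exp (- (w ^ 2) / (2 * \<delta>)) / sqrt (2 * pi * \<delta>)"
      using d ww by (intro divide_right_mono) auto
    also have "\<dots> \<le> heat_kernel \<delta> (z - x)" using hk_lower[OF d(1) that] .
    finally show ?thesis .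
  qed
  have val: "exp (- 1 / 2) / sqrt (2 * pi * \<delta>) * w = exp (- 1 / 2) / (2 * sqrt (2 * pi))"
    using d by (simp add: w_def real_sqrt_mult field_simps)
  have mono: "exp (- 1 / 2) / (2 * sqrt (2 * pi * D)) \<le> exp (- 1 / 2) / (2 * sqrt (2 * pi))"
  proof -
    have "sqrt (2 * pi) \<le> sqrt (2 * pi * D)" using D by (simp add: pi_gt_zero)
    then show ?thesis by (intro divide_left_mono) auto
  qed
  show ?thesis
  proof (cases "x + w \<le> H + 1")
    case True
    have "(\<integral>\<^sup>+z. ennreal (heat_kernel \<delta> (z - x)) * indicator {H..H+1} z \<partial>lborel)
        \<ge> ennreal (exp (- 1 / 2) / sqrt (2 * pi * \<delta>) * ((x + w) - x))"
      using x True w0 hb d pi_gt_zero by (intro int_interval_lower) (auto intro: divide_nonneg_nonneg)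
    then show ?thesis using val mono by (smt (verit) ennreal_leI order_trans)
  next
    case False
    have "(\<integral>\<^sup>+z. ennreal (heat_kernel \<delta> (z - x)) * indicator {H..H+1} z \<partial>lborel)
        \<ge> ennreal (exp (- 1 / 2) / sqrt (2 * pi * \<delta>) * (x - (x - w)))"
      using x False w0 hb d pi_gt_zero by (intro int_interval_lower) (auto intro: divide_nonneg_nonneg)
    then show ?thesis using val mono by (smt (verit) ennreal_leI order_trans)
  qed
next
  case False
  have hb: "heat_kernel \<delta> (z - x) \<ge> exp (- 1 / 2) / (2 * sqrt (2 * pi * D))" if "z \<in> {H..H+1}" for z
  proof -
    have a: "\<bar>z - x\<bar> \<le> 1" using that x by auto
    have "exp (- 1 / 2) / (2 * sqrt (2 * pi * D)) \<le> exp (- 1 / 2) / sqrt (2 * pi * D)"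
    proof (rule divide_left_mono)
      have "sqrt (2 * pi * D) > 0" using D by simp
      then show "sqrt (2 * pi * D) \<le> 2 * sqrt (2 * pi * D)" by simp
      show "0 < 2 * sqrt (2 * pi * D) * sqrt (2 * pi * D)" using D by simp
    qed simp
    also have "\<dots> \<le> exp (- (1 ^ 2) / (2 * \<delta>)) / sqrt (2 * pi * \<delta>)"
    proof (rule frac_le)
      show "exp (- 1 / 2) \<le> exp (- (1 ^ 2) / (2 * \<delta>))" using False by (simp add: field_simps)
      show "0 < sqrt (2 * pi * \<delta>)" using d by simp
      show "sqrt (2 * pi * \<delta>) \<le> sqrt (2 * pi * D)" using d by simp
    qed simp
    also have "\<dots> \<le> heat_kernel \<delta> (z - x)" using hk_lower[OF d(1) a] .
    finally show ?thesis .
  qed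
  have "(\<integral>\<^sup>+z. ennreal (heat_kernel \<delta> (z - x)) * indicator {H..H+1} z \<partial>lborel)
        \<ge> ennreal (exp (- 1 / 2) / (2 * sqrt (2 * pi * D)) * ((H + 1) - H))"
    using hb D pi_gt_zero by (intro int_interval_lower) (auto intro: divide_nonneg_nonneg)
  then show ?thesis by simp
qed



lemma lborel_shift_emeasure:
  fixes c :: real
  assumes "A \<in> sets borel"
  shows "emeasure lborel {x. x + c \<in> A} = emeasure lborel A"
proof -
  have "emeasure (distr lborel borel ((+) c)) A = emeasure lborel A"
    by (simp add: lborel_distr_plus)
  moreover have "emeasure (distr lborel borel ((+) c)) A = emeasure lborel ((+) c -` A \<inter> space lborel)"
    using assms by (intro emeasure_distr) auto
  moreover have "(+) c -` A \<inter> space lborel = {x. x + c \<in> A}" by (auto simp: add.commute)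
  ultimately show ?thesis by simp
qed

lemma shift_meas:
  fixes hv :: "'i \<Rightarrow> real"
  shows "(\<lambda>y. restrict (\<lambda>i. y i + hv i) I) \<in> measurable (PiM I (\<lambda>_. lborel)) (PiM I (\<lambda>_. lborel))"
  by (rule measurable_restrict) simp

lemma shift_distr:
  fixes hv :: "'i \<Rightarrow> real"
  assumes fin: "finite I"
  shows "distr (PiM I (\<lambda>_. lborel)) (PiM I (\<lambda>_. lborel)) (\<lambda>y. restrict (\<lambda>i. y i + hv i) I) = PiM I (\<lambda>_. lborel)"
proof -
  interpret product_sigma_finite "\<lambda>_::'i. lborel::real measure" by standard
  show ?thesis
  proof (rule PiM_eqI[OF fin])
    show "sets (distr (PiM I (\<lambda>_. lborel)) (PiM I (\<lambda>_. lborel)) (\<lambda>y. restrict (\<lambda>i. y i + hv i) I)) = sets (PiM I (\<lambda>_. lborel))"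
      by simp
    fix A :: "'i \<Rightarrow> real set" assume A: "\<And>i. i \<in> I \<Longrightarrow> A i \<in> sets lborel"
    have pre: "(\<lambda>y. restrict (\<lambda>i. y i + hv i) I) -` PiE I A \<inter> space (PiM I (\<lambda>_. lborel))
        = PiE I (\<lambda>i. {x. x + hv i \<in> A i})"
      by (auto simp: space_PiM PiE_def Pi_def extensional_def)
    have "emeasure (distr (PiM I (\<lambda>_. lborel)) (PiM I (\<lambda>_. lborel)) (\<lambda>y. restrict (\<lambda>i. y i + hv i) I)) (PiE I A)
       = emeasure (PiM I (\<lambda>_. lborel)) ((\<lambda>y. restrict (\<lambda>i. y i + hv i) I) -` PiE I A \<inter> space (PiM I (\<lambda>_. lborel)))"
      using A by (intro emeasure_distr shift_meas sets_PiM_I_finite) (auto simp: fin)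
    also have "\<dots> = (\<Prod>i\<in>I. emeasure lborel {x. x + hv i \<in> A i})"
      unfolding pre
    proof (rule emeasure_PiM[OF fin])
      fix i assume "i \<in> I"
      then have "A i \<in> sets borel" using A by simp
      then show "{x. x + hv i \<in> A i} \<in> sets lborel" by measurable
    qed
    also have "\<dots> = (\<Prod>i\<in>I. emeasure lborel (A i))"
      using A by (intro prod.cong refl lborel_shift_emeasure) auto
    finally show "emeasure (distr (PiM I (\<lambda>_. lborel)) (PiM I (\<lambda>_. lborel)) (\<lambda>y. restrict (\<lambda>i. y i + hv i) I)) (PiE I A)
       = (\<Prod>i\<in>I. emeasure lborel (A i))" .
  qed
qed

lemma shift_nn_integral:
  fixes hv :: "'i \<Rightarrow> real"
  assumes fin: "finite I" and F: "F \<in> borel_measurable (PiM I (\<lambda>_. lborel))"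
  shows "(\<integral>\<^sup>+y. F (restrict (\<lambda>i. y i + hv i) I) \<partial>PiM I (\<lambda>_. lborel)) = (\<integral>\<^sup>+y. F y \<partial>PiM I (\<lambda>_. lborel))"
proof -
  have "(\<integral>\<^sup>+y. F y \<partial>PiM I (\<lambda>_. lborel)) = (\<integral>\<^sup>+y. F y \<partial>distr (PiM I (\<lambda>_. lborel)) (PiM I (\<lambda>_. lborel)) (\<lambda>y. restrict (\<lambda>i. y i + hv i) I))"
    using shift_distr[OF fin, of hv] by simp
  also have "\<dots> = (\<integral>\<^sup>+y. F (restrict (\<lambda>i. y i + hv i) I) \<partial>PiM I (\<lambda>_. lborel))"
    using F by (intro nn_integral_distr shift_meas) simp
  finally show ?thesis ..
qed



lemma chain_split:
  assumes n: "length ts = n" "n \<ge> 1"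
  shows "chain_dens (l # ts @ [r]) (a # map f ts @ [b]) =
     heat_kernel (ts!0 - l) (f (ts!0) - a) *
     (\<Prod>i\<in>{1..<n}. heat_kernel (ts!i - ts!(i-1)) (f (ts!i) - f (ts!(i-1)))) *
     heat_kernel (r - ts!(n-1)) (b - f (ts!(n-1)))"
proof -
  let ?tt = "l # ts @ [r]" and ?vv = "a # map f ts @ [b]"
  let ?g = "\<lambda>i. heat_kernel (?tt ! Suc i - ?tt ! i) (?vv ! Suc i - ?vv ! i)"
  have len: "length ?tt - 1 = Suc n" using n by simp
  have "chain_dens ?tt ?vv = (\<Prod>i<Suc n. ?g i)" unfolding chain_dens_def len ..
  also have "\<dots> = (\<Prod>i<n. ?g i) * ?g n" by simp
  also have "(\<Prod>i<n. ?g i) = ?g 0 * (\<Prod>i\<in>{1..<n}. ?g i)"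
  proof -
    have "{..<n} = insert 0 {1..<n}" using n by auto
    then show ?thesis by simp
  qed
  also have "(\<Prod>i\<in>{1..<n}. ?g i) = (\<Prod>i\<in>{1..<n}. heat_kernel (ts!i - ts!(i-1)) (f (ts!i) - f (ts!(i-1))))"
  proof (rule prod.cong)
    fix i assume i: "i \<in> {1..<n}"
    then obtain i' where i': "i = Suc i'" by (cases i) auto
    show "?g i = heat_kernel (ts!i - ts!(i-1)) (f (ts!i) - f (ts!(i-1)))"
      using i n unfolding i' by (simp add: nth_append)
  qed simp
  also have "?g 0 = heat_kernel (ts!0 - l) (f (ts!0) - a)"
    using n by (simp add: nth_append)
  also have "?g n = heat_kernel (r - ts!(n-1)) (b - f (ts!(n-1)))"
  proof -
    obtain n' where n': "n = Suc n'" using n by (cases n) auto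
    show ?thesis using n unfolding n' by (simp add: nth_append)
  qed
  finally show ?thesis .
qed



lemma chain_mono:
  fixes f :: "nat \<Rightarrow> real"
  assumes d: "\<forall>j\<in>{1..k-1}. f j - f (j+1) \<ge> c" and c: "c \<ge> 0" and j: "j \<in> {1..k}"
  shows "f k \<le> f j \<and> f j \<le> f 1"
proof
  have st: "f (Suc m) \<le> f m" if "1 \<le> m" "m < k" for m
    using d that c by (auto simp: Ball_def)
  show "f j \<le> f 1" using j
  proof (induction j)
    case 0 then show ?case by simp
  next
    case (Suc m)
    show ?case
    proof (cases "m = 0")
      case True then show ?thesis by simp
    next
      case False
      then have "f (Suc m) \<le> f m" using st[of m] Suc.prems by auto
      also have "f m \<le> f 1" using Suc False by auto
      finally show ?thesis .
    qed
  qed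
  have "j \<le> k" using j by simp
  then show "f k \<le> f j"
  proof (induction rule: inc_induct)
    case base then show ?case by simp
  next
    case (step m)
    then have "f (Suc m) \<le> f m" using st[of m] j by auto
    then show ?case using step by simp
  qed
qed

lemma chainF_nz:
  assumes "chainF k ts q K m y \<noteq> 0" "j \<in> {1..k}"
  shows "q j (y (j, ts!0)) \<noteq> 0" "\<And>i. i \<in> {1..<m} \<Longrightarrow> K j i (y (j, ts!(i-1))) (y (j, ts!i)) \<noteq> 0"
proof -
  have *: "q j (y (j, ts!0)) * (\<Prod>i\<in>{1..<m}. K j i (y (j, ts!(i-1))) (y (j, ts!i))) \<noteq> 0"
    using assms unfolding chainF_def by (simp add: prod_zero_iff)
  then show "q j (y (j, ts!0)) \<noteq> 0" by auto
  fix i assume "i \<in> {1..<m}"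
  then show "K j i (y (j, ts!(i-1))) (y (j, ts!i)) \<noteq> 0" using * by (auto simp: prod_zero_iff)
qed

lemma prod_if_one:
  fixes f :: "nat \<Rightarrow> 'a::comm_monoid_mult"
  assumes "j0 \<in> A" "finite A"
  shows "(\<Prod>j\<in>A. if j = j0 then f j else 1) = f j0"
  using assms by (simp add: prod.delta)

lemma inv_sqrt_ge: "x > 0 \<Longrightarrow> 1 / sqrt x \<ge> exp (- x)"
proof -
  assume x: "x > 0"
  have "sqrt x \<le> 1 + x"
  proof -
    have "x \<le> (1 + x) ^ 2" using x by (simp add: power2_eq_square algebra_simps)
    then show ?thesis using x by (simp add: real_sqrt_le_iff real_le_lsqrt)
  qed
  also have "\<dots> \<le> exp x" by (rule exp_ge_add_one_self)
  finally have "sqrt x \<le> exp x" .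
  then show ?thesis using x by (simp add: exp_minus field_simps)
qed

lemma hk_shift: "t > 0 \<Longrightarrow> heat_kernel t (x + c) = heat_kernel t x * exp (- (2 * x * c + c ^ 2) / (2 * t))"
proof -
  assume t: "t > 0"
  have "exp (- ((x + c) ^ 2) / (2 * t)) = exp (- (x ^ 2) / (2 * t)) * exp (- (2 * x * c + c ^ 2) / (2 * t))"
    unfolding mult_exp_exp using t by (simp add: power2_eq_square field_simps)
  then show ?thesis unfolding heat_kernel_def by simp
qed

lemma expo_bound:
  fixes s t x R0 Phi phi :: real
  assumes s: "s \<ge> 1" and t: "s ^ 2 \<le> t" and x: "x \<le> R0 * s ^ 7 * sqrt t"
    and phi: "0 \<le> phi" "phi \<le> Phi * s ^ 4" and R0: "R0 \<ge> 0"
  shows "(2 * x * phi + phi ^ 2) / (2 * t) \<le> (R0 * Phi + Phi ^ 2 / 2) * s ^ 10"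
proof -
  have s2: "s ^ 2 \<ge> 1" using s by (simp add: one_le_power)
  have tpos: "t > 0" using s2 t by linarith
  have st: "s \<le> sqrt t" using t by (intro real_le_rsqrt)
  define u where "u = sqrt t"
  have u: "u > 0" "t = u * u" using tpos unfolding u_def by auto
  have su: "s \<le> u" using st unfolding u_def .
  have A0: "R0 * s ^ 7 * phi \<ge> 0" using R0 s phi by simp
  have "2 * x * phi \<le> 2 * (R0 * s ^ 7 * u) * phi" using x phi unfolding u_def by (intro mult_right_mono) auto
  then have "(2 * x * phi) / (2 * t) \<le> (2 * (R0 * s ^ 7 * u) * phi) / (2 * t)"
    using tpos by (intro divide_right_mono) auto
  also have "(2 * (R0 * s ^ 7 * u) * phi) / (2 * t) = R0 * s ^ 7 * phi / u"
    unfolding u(2) using u(1) by (simp add: field_simps)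
  also have "\<dots> \<le> R0 * s ^ 7 * phi / s"
    using su s A0 by (intro divide_left_mono) auto
  also have "\<dots> = R0 * s ^ 6 * phi"
  proof -
    have "s ^ 7 = s ^ 6 * s" using power_Suc2[of s 6] by simp
    then show ?thesis using s by simp
  qed
  also have "\<dots> \<le> R0 * s ^ 6 * (Phi * s ^ 4)" using phi R0 by (intro mult_left_mono) auto
  also have "\<dots> = R0 * Phi * s ^ 10" by (simp add: power_add[symmetric] mult_ac)
  finally have a: "(2 * x * phi) / (2 * t) \<le> R0 * Phi * s ^ 10" .
  have "phi ^ 2 / (2 * t) \<le> (Phi * s ^ 4) ^ 2 / (2 * t)" using phi tpos by (intro divide_right_mono power_mono) auto
  also have "\<dots> \<le> (Phi * s ^ 4) ^ 2 / (2 * s ^ 2)" using t s tpos by (intro divide_left_mono) auto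
  also have "(Phi * s ^ 4) ^ 2 / (2 * s ^ 2) = Phi ^ 2 * s ^ 6 / 2"
  proof -
    have "(Phi * s ^ 4) ^ 2 = (Phi ^ 2 * s ^ 6) * s ^ 2" by (simp add: power_mult_distrib power_mult[symmetric] power_add[symmetric])
    then show ?thesis using s by simp
  qed
  also have "\<dots> \<le> Phi ^ 2 * s ^ 10 / 2"
  proof -
    have "s ^ 6 \<le> s ^ 10" using s by (intro power_increasing) auto
    then show ?thesis by (intro divide_right_mono mult_left_mono) auto
  qed
  finally have b: "phi ^ 2 / (2 * t) \<le> Phi ^ 2 * s ^ 10 / 2" .
  have "(2 * x * phi + phi ^ 2) / (2 * t) = (2 * x * phi) / (2 * t) + phi ^ 2 / (2 * t)" by (simp add: add_divide_distrib)
  also have "\<dots> \<le> R0 * Phi * s ^ 10 + Phi ^ 2 * s ^ 10 / 2" using a b by simp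
  also have "\<dots> = (R0 * Phi + Phi ^ 2 / 2) * s ^ 10" by (simp add: algebra_simps)
  finally show ?thesis .
qed

locale ctx =
  fixes k :: nat and b0 b1 b2 lam0 lam1 mu T l r :: real
    and am ap :: "nat \<Rightarrow> real" and g :: "real \<Rightarrow> real" and P :: "real set"
  assumes k1: "k \<ge> 1"
    and b0: "b0 > 0" and b1: "b1 > 0" and b2: "b2 > 0" and lam0: "lam0 > 0" and lam1: "lam1 > 0"
    and mu: "0 < mu" "mu < 1"
    and T: "T \<ge> 10" and lr: "l < r" and finP: "finite P" and Psub: "P \<subseteq> {l<..<r}"
    and Sne: "P \<inter> {l + sqrt T .. r - sqrt T} \<noteq> {}"
    and gl: "g l = 0" and gr: "g r = 0"
    and rl: "r - l \<le> b0 * T" and cardP: "real (card P) \<le> b0 * T"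
    and lip: "\<forall>x\<in>{l..r}. \<forall>y\<in>{l..r}. \<bar>g x - g y\<bar> \<le> b1 * T * \<bar>x - y\<bar>"
    and sep: "\<forall>j\<in>{1..k-1}. am j - am (j+1) \<ge> lam0 * sqrt T \<and> ap j - ap (j+1) \<ge> lam0 * sqrt T"
    and amk: "am k - g l \<ge> lam1 * T" and apk: "ap k - g r \<ge> lam1 * T"
    and am1: "am 1 - g l \<le> b2 * T ^ 2" and ap1: "ap 1 - g r \<le> b2 * T ^ 2"
begin

definition "S = P \<inter> {l + sqrt T .. r - sqrt T}"
definition "ts = sorted_list_of_set S"
definition "n = length ts"
definition "I = {1..k} \<times> S"
definition "M = PiM I (\<lambda>_. lborel :: real measure)"
definition "t0 = ts!0 - l"
definition "tn = r - ts!(n-1)"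
definition "dl i = (if 1 \<le> i \<and> i < n then ts!i - ts!(i-1) else 1)"
definition "sT = T powr (1/4)"

lemma finS: "finite S" unfolding S_def using finP by simp
lemma setts: "set ts = S" unfolding ts_def using finS by simp
lemma dist_ts: "distinct ts" unfolding ts_def by simp
lemma sorted_ts: "sorted_wrt (<) ts" unfolding ts_def by (rule strict_sorted_list_of_set)
lemma n1: "n \<ge> 1"
proof -
  have "S \<noteq> {}" using Sne unfolding S_def .
  then have "ts \<noteq> []" using setts by auto
  then show ?thesis unfolding n_def by (cases ts) auto
qed
lemma take_n: "set (take n ts) = S" unfolding n_def using setts by simp
lemma I_eq: "I = {1..k} \<times> set (take n ts)" unfolding I_def take_n ..
lemma finI: "finite I" unfolding I_def using finS by simp
lemma M_eq: "config_space k S = M" unfolding config_space_def M_def I_def ..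

lemma Tpos: "T > 0" using T by simp
lemma sqT1: "sqrt T \<ge> 1" using T by simp
lemma sqT_le: "sqrt T \<le> T"
proof -
  have "sqrt T * 1 \<le> sqrt T * sqrt T" using sqT1 by (intro mult_left_mono) auto
  then show ?thesis using Tpos by simp
qed

lemma ts_in: "i < n \<Longrightarrow> ts!i \<in> S"
proof -
  assume "i < n"
  then have "ts!i \<in> set ts" unfolding n_def by simp
  then show ?thesis using setts by simp
qed
lemma ts_bounds: "i < n \<Longrightarrow> l + sqrt T \<le> ts!i \<and> ts!i \<le> r - sqrt T"
  using ts_in unfolding S_def by auto
lemma ts_lr: "i < n \<Longrightarrow> l \<le> ts!i \<and> ts!i \<le> r"
proof -
  assume "i < n"
  from ts_bounds[OF this] sqT1 show ?thesis by linarith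
qed

lemma t0_ge: "t0 \<ge> sqrt T" using ts_bounds[of 0] n1 unfolding t0_def by auto
lemma tn_ge: "tn \<ge> sqrt T" using ts_bounds[of "n-1"] n1 unfolding tn_def by auto
lemma t0_le: "t0 \<le> b0 * T" using ts_lr[of 0] n1 rl unfolding t0_def by auto
lemma tn_le: "tn \<le> b0 * T" using ts_lr[of "n-1"] n1 rl unfolding tn_def by auto
lemma t0_pos: "t0 > 0" using t0_ge sqT1 by linarith
lemma tn_pos: "tn > 0" using tn_ge sqT1 by linarith
lemma dl_pos: "dl i > 0"
proof (cases "1 \<le> i \<and> i < n")
  case True
  then have "ts!(i-1) < ts!i" using sorted_wrt_nth_less[OF sorted_ts, of "i-1" i] n_def by auto
  then show ?thesis using True unfolding dl_def by simp
qed (auto simp: dl_def)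
lemma dl_le: "dl i \<le> 1 + b0 * T"
proof (cases "1 \<le> i \<and> i < n")
  case True
  then have "i - 1 < n" by linarith
  then have "ts!i - ts!(i-1) \<le> r - l" using True ts_lr[of i] ts_lr[of "i-1"] by auto
  then show ?thesis using True rl unfolding dl_def by simp
next
  case False
  have "b0 * T > 0" using b0 Tpos by simp
  then show ?thesis using False by (auto simp: dl_def)
qed

lemma n_le: "real n \<le> b0 * T"
proof -
  have "card S \<le> card P" unfolding S_def using finP by (intro card_mono) auto
  moreover have "n = card S" unfolding n_def ts_def by simp
  ultimately show ?thesis using cardP by linarith
qed

lemma sT_props: "sT \<ge> 1" "T = sT ^ 4" "sqrt T = sT ^ 2" "T powr (5/2) = sT ^ 10"
proof -
  have Tp: "T > 0" using Tpos .
  have "sT ^ 4 = (T powr (1/4)) ^ 4" unfolding sT_def ..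
  also have "\<dots> = T powr (4 * (1/4))" using Tp by (simp add: powr_realpow[symmetric] powr_powr)
  finally show "T = sT ^ 4" using Tp by simp
  have "sT ^ 2 = T powr (2 * (1/4))" unfolding sT_def using Tp by (simp add: powr_realpow[symmetric] powr_powr)
  then show "sqrt T = sT ^ 2" using Tp by (simp add: powr_half_sqrt)
  have "sT ^ 10 = T powr (10 * (1/4))" unfolding sT_def using Tp by (simp add: powr_realpow[symmetric] powr_powr)
  then show "T powr (5/2) = sT ^ 10" by simp
  show "sT \<ge> 1" unfolding sT_def using T by (intro ge_one_powr_ge_zero) auto
qed


lemma am_bounds: "j \<in> {1..k} \<Longrightarrow> 0 < am j \<and> am j \<le> b2 * T ^ 2"
proof -
  assume j: "j \<in> {1..k}"
  have d: "\<forall>j\<in>{1..k-1}. am j - am (j+1) \<ge> lam0 * sqrt T" using sep by auto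
  have c: "lam0 * sqrt T \<ge> 0" using lam0 Tpos by simp
  have "am k \<le> am j \<and> am j \<le> am 1"
    by (rule chain_mono[OF d c j])
  moreover have "am k > 0" using amk gl lam1 Tpos by (smt (verit) mult_pos_pos)
  ultimately show ?thesis using am1 gl by auto
qed

lemma ap_bounds: "j \<in> {1..k} \<Longrightarrow> 0 < ap j \<and> ap j \<le> b2 * T ^ 2"
proof -
  assume j: "j \<in> {1..k}"
  have d: "\<forall>j\<in>{1..k-1}. ap j - ap (j+1) \<ge> lam0 * sqrt T" using sep by auto
  have c: "lam0 * sqrt T \<ge> 0" using lam0 Tpos by simp
  have "ap k \<le> ap j \<and> ap j \<le> ap 1"
    by (rule chain_mono[OF d c j])
  moreover have "ap k > 0" using apk gr lam1 Tpos by (smt (verit) mult_pos_pos)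
  ultimately show ?thesis using ap1 gr by auto
qed

lemma g_bound: "p \<in> {l..r} \<Longrightarrow> \<bar>g p\<bar> \<le> b1 * b0 * T ^ 2"
proof -
  assume p: "p \<in> {l..r}"
  have "\<bar>g p - g l\<bar> \<le> b1 * T * \<bar>p - l\<bar>" using p lr by (intro lip[rule_format]) auto
  also have "\<dots> \<le> b1 * T * (b0 * T)" using p rl b1 Tpos by (intro mult_left_mono) auto
  finally show ?thesis using gl by (simp add: power2_eq_square mult_ac)
qed

definition "Gj j y = chain_dens (l # ts @ [r]) (am j # map (\<lambda>t. y (j,t)) ts @ [ap j])"
definition "Fu y = (\<Prod>j\<in>{1..k}. Gj j y)"
definition "first j y = heat_kernel t0 (y (j, ts!0) - am j)"
definition "mid j y = (\<Prod>i\<in>{1..<n}. heat_kernel (dl i) (y (j, ts!i) - y (j, ts!(i-1))))"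
definition "lst j y = heat_kernel tn (ap j - y (j, ts!(n-1)))"
definition "Psi y = (\<Prod>j\<in>{1..k}. first j y * mid j y)"
definition "lastf y = (\<Prod>j\<in>{1..k}. lst j y)"

lemma Gj_split: "Gj j y = first j y * mid j y * lst j y"
proof -
  have "Gj j y = heat_kernel (ts!0 - l) (y (j, ts!0) - am j) *
     (\<Prod>i\<in>{1..<n}. heat_kernel (ts!i - ts!(i-1)) (y (j, ts!i) - y (j, ts!(i-1)))) *
     heat_kernel (r - ts!(n-1)) (ap j - y (j, ts!(n-1)))"
    unfolding Gj_def using chain_split[of ts n l r "am j" "\<lambda>t. y (j,t)" "ap j"] n1 n_def by simp
  also have "(\<Prod>i\<in>{1..<n}. heat_kernel (ts!i - ts!(i-1)) (y (j, ts!i) - y (j, ts!(i-1)))) = mid j y"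
    unfolding mid_def by (intro prod.cong refl) (auto simp: dl_def)
  finally show ?thesis unfolding first_def lst_def t0_def tn_def .
qed

lemma Fu_split: "Fu y = Psi y * lastf y"
  unfolding Fu_def Psi_def lastf_def prod.distrib[symmetric] Gj_split ..

lemma first_nn: "first j y \<ge> 0" unfolding first_def using t0_pos by (rule hk_nonneg)
lemma lst_nn: "lst j y \<ge> 0" unfolding lst_def using tn_pos by (rule hk_nonneg)
lemma mid_nn: "mid j y \<ge> 0" unfolding mid_def using dl_pos by (intro prod_nonneg hk_nonneg) auto
lemma Psi_nn: "Psi y \<ge> 0" unfolding Psi_def by (intro prod_nonneg mult_nonneg_nonneg first_nn mid_nn)
lemma lastf_nn: "lastf y \<ge> 0" unfolding lastf_def using lst_nn by (intro prod_nonneg) auto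
lemma tn1: "tn \<ge> 1" using tn_ge sqT1 by linarith
lemma t01: "t0 \<ge> 1" using t0_ge sqT1 by linarith
lemma lst_le1: "lst j y \<le> 1" unfolding lst_def using tn1 by (rule hk_le1)
lemma lastf_le1: "lastf y \<le> 1" unfolding lastf_def using lst_nn lst_le1 by (intro prod_le_1) auto
lemma Fu_nn: "Fu y \<ge> 0" unfolding Fu_split using Psi_nn lastf_nn by simp
lemma Fu_le_Psi: "Fu y \<le> Psi y" unfolding Fu_split using Psi_nn lastf_nn lastf_le1
  by (simp add: mult_left_le)

definition "qU j z = ennreal (heat_kernel t0 (z - am j))"
definition "KU j i x z = ennreal (heat_kernel (dl i) (z - x))"

lemma qU_meas: "qU j \<in> borel_measurable borel" unfolding qU_def heat_kernel_def by measurable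
lemma KU_meas: "(\<lambda>(x,z). KU j i x z) \<in> borel_measurable (borel \<Otimes>\<^sub>M borel)"
  unfolding KU_def heat_kernel_def by measurable
lemma qU_int: "(\<integral>\<^sup>+z. qU j z \<partial>lborel) = 1" unfolding qU_def using t0_pos by (rule hk_int1)
lemma KU_int: "(\<integral>\<^sup>+z. KU j i x z \<partial>lborel) = 1" unfolding KU_def using dl_pos by (rule hk_int1)

lemma chainU: "chainF k ts qU KU n y = ennreal (Psi y)"
proof -
  have "chainF k ts qU KU n y = (\<Prod>j\<in>{1..k}. ennreal (first j y) * ennreal (mid j y))"
    unfolding chainF_def qU_def KU_def first_def mid_def
    using dl_pos by (subst prod_ennreal) (auto intro!: hk_nonneg)
  also have "\<dots> = (\<Prod>j\<in>{1..k}. ennreal (first j y * mid j y))"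
    by (intro prod.cong refl) (simp add: ennreal_mult first_nn mid_nn)
  also have "\<dots> = ennreal (Psi y)" unfolding Psi_def
    by (rule prod_ennreal) (intro mult_nonneg_nonneg first_nn mid_nn)
  finally show ?thesis .
qed

lemma coord: "j \<in> {1..k} \<Longrightarrow> i < n \<Longrightarrow> (\<lambda>y. y (j, ts!i)) \<in> borel_measurable M"
  unfolding M_def I_def using ts_in
  by (intro measurable_component_singleton[THEN measurable_compose[where L=borel]]) auto

lemma hk_meas: "heat_kernel c \<in> borel_measurable borel"
proof -
  have "(\<lambda>x. exp (- (x ^ 2) / (2 * c)) / sqrt (2 * pi * c)) \<in> borel_measurable borel" by measurable
  then show ?thesis unfolding heat_kernel_def[abs_def] .
qed

lemma hk_comp: "f \<in> borel_measurable N \<Longrightarrow> (\<lambda>y. heat_kernel c (f y)) \<in> borel_measurable N"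
  using measurable_compose[OF _ hk_meas] by blast

lemma Psi_meas: "Psi \<in> borel_measurable M"
  unfolding Psi_def first_def mid_def
  using n1 by (intro borel_measurable_prod borel_measurable_times hk_comp borel_measurable_diff coord) auto

lemma lastf_meas: "lastf \<in> borel_measurable M"
  unfolding lastf_def lst_def
  using n1 by (intro borel_measurable_prod hk_comp borel_measurable_diff coord) auto

lemma Fu_meas: "Fu \<in> borel_measurable M"
  unfolding Fu_split[abs_def] using Psi_meas lastf_meas by (intro borel_measurable_times)

lemma Psi_int: "(\<integral>\<^sup>+y. ennreal (Psi y) \<partial>M) \<le> 1"
proof -
  have "(\<integral>\<^sup>+y. ennreal (Psi y) \<partial>M) = (\<integral>\<^sup>+y. chainF k ts qU KU n y \<partial>PiM ({1..k} \<times> set (take n ts)) (\<lambda>_. lborel))"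
    unfolding chainU M_def I_eq ..
  also have "\<dots> \<le> (\<Prod>j\<in>{1..k}. \<integral>\<^sup>+z. qU j z \<partial>lborel)"
  proof (rule chain_upper)
    fix j i x show "(\<integral>\<^sup>+z. KU j i x z \<partial>lborel) \<le> 1" using KU_int[of j i x] by simp
  qed (use n1 dist_ts qU_meas KU_meas in \<open>auto simp: n_def\<close>)
  also have "\<dots> = 1" using qU_int by simp
  finally show ?thesis .
qed

definition "Phi = lam1 + real k * lam0"
definition "E = b1 * b0 + b2 + 2 * real k + 2"
definition "K1 = real k * (E ^ 2 + 4 * pi * b0 + b0 * (3/2 + 2 * pi) + 2 * pi * b0 ^ 2)"
definition "R0 = 2 * sqrt (K1 + 6 * real k)"
definition "C3 = 2 * real k * (R0 * Phi + Phi ^ 2 / 2)"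
definition "R = R0 * sT ^ 7"
definition "Tail1 j0 = {y. y (j0, ts!0) > am j0 + R * sqrt t0}"
definition "Tail2 j0 = {y. y (j0, ts!(n-1)) > ap j0 + R * sqrt tn}"

lemma K1_nn: "K1 \<ge> 0" unfolding K1_def using b0 by (intro mult_nonneg_nonneg add_nonneg_nonneg) auto
lemma R0_nn: "R0 \<ge> 0" unfolding R0_def using K1_nn by simp
lemma R_nn: "R \<ge> 0" unfolding R_def using R0_nn sT_props by simp

lemma tail1_bound:
  assumes j0: "j0 \<in> {1..k}"
  shows "(\<integral>\<^sup>+y. ennreal (Fu y) * indicator (Tail1 j0) y \<partial>M) \<le> ennreal (sqrt 2 * exp (- (R ^ 2) / 4))"
proof -
  define U where "U = am j0 + R * sqrt t0"
  define q' where "q' j z = (if j = j0 then qU j z * indicator {U<..} z else qU j z)" for j z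
  have q'm: "q' j \<in> borel_measurable borel" for j unfolding q'_def using qU_meas by measurable
  have pw: "ennreal (Fu y) * indicator (Tail1 j0) y \<le> chainF k ts q' KU n y" for y
  proof -
    have "chainF k ts q' KU n y = (\<Prod>j\<in>{1..k}. (qU j (y (j, ts!0)) * (\<Prod>i\<in>{1..<n}. KU j i (y (j, ts!(i-1))) (y (j, ts!i))))
          * (if j = j0 then indicator {U<..} (y (j0, ts!0)) else 1))"
      unfolding chainF_def q'_def by (intro prod.cong refl) (auto simp: mult_ac)
    also have "\<dots> = chainF k ts qU KU n y * indicator {U<..} (y (j0, ts!0))"
      unfolding prod.distrib chainF_def using j0 by (subst prod_if_one) auto
    also have "\<dots> = ennreal (Psi y) * indicator (Tail1 j0) y"
      unfolding chainU Tail1_def U_def by (simp split: split_indicator)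
    finally have e: "chainF k ts q' KU n y = ennreal (Psi y) * indicator (Tail1 j0) y" .
    show ?thesis unfolding e using Fu_le_Psi by (intro mult_right_mono ennreal_leI) auto
  qed
  have "(\<integral>\<^sup>+y. ennreal (Fu y) * indicator (Tail1 j0) y \<partial>M) \<le> (\<integral>\<^sup>+y. chainF k ts q' KU n y \<partial>M)"
    using pw by (intro nn_integral_mono) auto
  also have "\<dots> \<le> (\<Prod>j\<in>{1..k}. \<integral>\<^sup>+z. q' j z \<partial>lborel)"
    unfolding M_def I_eq
  proof (rule chain_upper)
    fix j i x show "(\<integral>\<^sup>+z. KU j i x z \<partial>lborel) \<le> 1" using KU_int[of j i x] by simp
  qed (use n1 dist_ts q'm KU_meas in \<open>auto simp: n_def\<close>)
  also have "\<dots> = (\<Prod>j\<in>{1..k}. if j = j0 then (\<integral>\<^sup>+z. qU j0 z * indicator {U<..} z \<partial>lborel) else 1)"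
    by (intro prod.cong refl) (auto simp: q'_def qU_int)
  also have "\<dots> = (\<integral>\<^sup>+z. qU j0 z * indicator {U<..} z \<partial>lborel)"
    using j0 by (subst prod_if_one) auto
  also have "\<dots> \<le> ennreal (sqrt 2 * exp (- ((U - am j0) ^ 2) / (4 * t0)))"
    unfolding qU_def using t0_pos R_nn by (intro hk_tail) (auto simp: U_def)
  also have "(U - am j0) ^ 2 / (4 * t0) = R ^ 2 / 4"
    unfolding U_def using t0_pos by (simp add: power_mult_distrib)
  then have "ennreal (sqrt 2 * exp (- ((U - am j0) ^ 2) / (4 * t0))) = ennreal (sqrt 2 * exp (- (R ^ 2) / 4))"
    by (metis minus_divide_left)
  finally show ?thesis .
qed

lemma hk_upper: "t \<ge> 1 \<Longrightarrow> heat_kernel t x \<le> exp (- (x ^ 2) / (2 * t))"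
proof -
  assume t: "t \<ge> 1"
  have "1 \<le> sqrt (2 * pi * t)"
  proof -
    have "1 * 1 \<le> (2 * pi) * t" using t pi_gt3 by (intro mult_mono) auto
    then show ?thesis by (simp add: real_le_rsqrt)
  qed
  then show ?thesis unfolding heat_kernel_def by (simp add: divide_le_eq mult_le_cancel_left1)
qed

lemma tail2_bound:
  assumes j0: "j0 \<in> {1..k}"
  shows "(\<integral>\<^sup>+y. ennreal (Fu y) * indicator (Tail2 j0) y \<partial>M) \<le> ennreal (sqrt 2 * exp (- (R ^ 2) / 4))"
proof -
  have pw: "ennreal (Fu y) * indicator (Tail2 j0) y \<le> ennreal (Psi y) * ennreal (exp (- (R ^ 2) / 2))" for y
  proof (cases "y \<in> Tail2 j0")
    case True
    have "lastf y = lst j0 y * (\<Prod>j\<in>{1..k} - {j0}. lst j y)"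
      unfolding lastf_def using j0 by (simp add: prod.remove)
    also have "\<dots> \<le> lst j0 y * 1"
      using lst_nn lst_le1 by (intro mult_left_mono prod_le_1) auto
    also have "lst j0 y \<le> exp (- ((ap j0 - y (j0, ts!(n-1))) ^ 2) / (2 * tn))"
      unfolding lst_def using tn1 by (rule hk_upper)
    also have "\<dots> \<le> exp (- (R ^ 2) / 2)"
    proof -
      have a: "R * sqrt tn \<le> \<bar>ap j0 - y (j0, ts!(n-1))\<bar>" using True unfolding Tail2_def by auto
      have "(R * sqrt tn) ^ 2 \<le> (ap j0 - y (j0, ts!(n-1))) ^ 2"
        using a R_nn tn_pos by (metis abs_ge_zero power2_abs power_mono mult_nonneg_nonneg real_sqrt_ge_zero less_imp_le)
      then have "R ^ 2 * tn \<le> (ap j0 - y (j0, ts!(n-1))) ^ 2" using tn_pos by (simp add: power_mult_distrib)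
      then have "R ^ 2 / 2 \<le> (ap j0 - y (j0, ts!(n-1))) ^ 2 / (2 * tn)" using tn_pos by (simp add: field_simps)
      then show ?thesis by simp
    qed
    finally have "lastf y \<le> exp (- (R ^ 2) / 2)" by simp
    then have "Fu y \<le> Psi y * exp (- (R ^ 2) / 2)" unfolding Fu_split using Psi_nn by (intro mult_left_mono) auto
    then show ?thesis using True Psi_nn by (simp add: ennreal_mult[symmetric] ennreal_leI)
  next
    case False then show ?thesis by simp
  qed
  have "(\<integral>\<^sup>+y. ennreal (Fu y) * indicator (Tail2 j0) y \<partial>M) \<le> (\<integral>\<^sup>+y. ennreal (Psi y) * ennreal (exp (- (R ^ 2) / 2)) \<partial>M)"
    using pw by (intro nn_integral_mono) auto
  also have "\<dots> = (\<integral>\<^sup>+y. ennreal (Psi y) \<partial>M) * ennreal (exp (- (R ^ 2) / 2))"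
    using Psi_meas by (intro nn_integral_multc) auto
  also have "\<dots> \<le> 1 * ennreal (exp (- (R ^ 2) / 2))"
    using Psi_int by (intro mult_right_mono) auto
  also have "\<dots> \<le> ennreal (sqrt 2 * exp (- (R ^ 2) / 4))"
  proof -
    have "exp (- (R ^ 2) / 2) \<le> exp (- (R ^ 2) / 4)" by simp
    also have "\<dots> \<le> sqrt 2 * exp (- (R ^ 2) / 4)" by simp
    finally show ?thesis by (simp add: ennreal_leI)
  qed
  finally show ?thesis .
qed

definition "Hj j = b1 * b0 * T ^ 2 + 1 + 2 * (real k - real j)"
definition "B j = {Hj j .. Hj j + 1}"
definition "qL j z = qU j z * indicator (B j) z"
definition "KL j i x z = KU j i x z * indicator (B j) z"
definition "c0 = exp (- ((E * T ^ 2) ^ 2) / (2 * t0)) / sqrt (2 * pi * t0)"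
definition "cn = exp (- ((E * T ^ 2) ^ 2) / (2 * tn)) / sqrt (2 * pi * tn)"
definition "betar = exp (- 1 / 2) / (2 * sqrt (2 * pi * (1 + b0 * T)))"

lemma T2_ge1: "T ^ 2 \<ge> 1" using T by (simp add: one_le_power)

lemma B_dist:
  assumes j: "j \<in> {1..k}" and z: "z \<in> B j"
  shows "\<bar>z - am j\<bar> \<le> E * T ^ 2" "\<bar>ap j - z\<bar> \<le> E * T ^ 2"
proof -
  have Hlo: "Hj j \<ge> b1 * b0 * T ^ 2 + 1" using j unfolding Hj_def by auto
  have Hhi: "Hj j + 1 \<le> b1 * b0 * T ^ 2 + 2 * real k + 2" using j unfolding Hj_def by auto
  have z0: "z > 0" using z Hlo b0 b1 unfolding B_def by (smt (verit) atLeastAtMost_iff mult_nonneg_nonneg zero_le_power2)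
  have zhi: "z \<le> b1 * b0 * T ^ 2 + 2 * real k + 2" using z Hhi unfolding B_def by auto
  have kk: "2 * real k + 2 \<le> (2 * real k + 2) * T ^ 2" using T2_ge1 by (simp add: mult_le_cancel_left1)
  have EE: "E * T ^ 2 = b1 * b0 * T ^ 2 + b2 * T ^ 2 + (2 * real k + 2) * T ^ 2"
    unfolding E_def by (simp add: algebra_simps)
  have n2: "b2 * T ^ 2 \<ge> 0" using b2 by simp
  have n3: "b1 * b0 * T ^ 2 \<ge> 0" using b1 b0 by simp
  have a1: "0 < am j" "am j \<le> b2 * T ^ 2" using am_bounds[OF j] by auto
  have a2: "0 < ap j" "ap j \<le> b2 * T ^ 2" using ap_bounds[OF j] by auto
  show "\<bar>z - am j\<bar> \<le> E * T ^ 2" unfolding abs_le_iff using a1 n2 n3 z0 zhi kk EE by linarith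
  show "\<bar>ap j - z\<bar> \<le> E * T ^ 2" unfolding abs_le_iff using a2 n2 n3 z0 zhi kk EE by linarith
qed

lemma Box_W:
  assumes "\<And>j i. j \<in> {1..k} \<Longrightarrow> i < n \<Longrightarrow> y (j, ts!i) \<in> B j"
  shows "y \<in> W_event k g S"
  unfolding W_event_def
proof (intro CollectI ballI conjI)
  fix p assume p: "p \<in> S"
  then obtain i where i: "i < n" "p = ts!i" using setts unfolding n_def by (metis in_set_conv_nth)
  have pl: "p \<in> {l..r}" using ts_lr[OF i(1)] i by auto
  have "y (k, p) \<ge> Hj k" using assms[of k i] i k1 unfolding B_def by auto
  moreover have "Hj k = b1 * b0 * T ^ 2 + 1" unfolding Hj_def by simp
  ultimately show "y (k, p) > g p" using g_bound[OF pl] by auto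
  fix j assume j: "j \<in> {1..k-1}"
  have "y (j, p) \<ge> Hj j" using assms[of j i] i j unfolding B_def by auto
  moreover have "y (j+1, p) \<le> Hj (j+1) + 1" using assms[of "j+1" i] i j unfolding B_def by auto
  moreover have "Hj j = Hj (j+1) + 2" unfolding Hj_def by simp
  ultimately show "y (j, p) > y (j+1, p)" by simp
qed

lemma qL_meas: "qL j \<in> borel_measurable borel" unfolding qL_def B_def using qU_meas by measurable
lemma KL_meas: "(\<lambda>(x,z). KL j i x z) \<in> borel_measurable (borel \<Otimes>\<^sub>M borel)"
proof -
  have "(\<lambda>(x,z). KU j i x z * indicator (B j) z) \<in> borel_measurable (borel \<Otimes>\<^sub>M borel)"
    using KU_meas unfolding B_def by measurable
  then show ?thesis unfolding KL_def .
qed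

lemma qL_int: "j \<in> {1..k} \<Longrightarrow> (\<integral>\<^sup>+z. qL j z \<partial>lborel) \<ge> ennreal c0"
proof -
  assume j: "j \<in> {1..k}"
  have "(\<integral>\<^sup>+z. ennreal (heat_kernel t0 (z - am j)) * indicator (B j) z \<partial>lborel) \<ge> ennreal (c0 * ((Hj j + 1) - Hj j))"
  proof (rule int_interval_lower)
    show "c0 \<ge> 0" unfolding c0_def using t0_pos by simp
    fix z assume "z \<in> {Hj j..Hj j + 1}"
    then have "\<bar>z - am j\<bar> \<le> E * T ^ 2" using B_dist[OF j] unfolding B_def by auto
    then show "heat_kernel t0 (z - am j) \<ge> c0" unfolding c0_def using t0_pos by (rule hk_lower[rotated])
  qed (auto simp: B_def)
  then show ?thesis unfolding qL_def qU_def by simp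
qed

lemma KL_int: "j \<in> {1..k} \<Longrightarrow> x \<in> B j \<Longrightarrow> (\<integral>\<^sup>+z. KL j i x z \<partial>lborel) \<ge> ennreal betar"
  unfolding KL_def KU_def B_def betar_def
  using dl_pos dl_le b0 Tpos by (intro hk_step_lower) auto

lemma lower_W: "(\<integral>\<^sup>+y. ennreal (Fu y) * indicator (W_event k g S) y \<partial>M) \<ge> ennreal (c0 ^ k * betar ^ (k * (n - 1)) * cn ^ k)"
proof -
  have c0nn: "c0 \<ge> 0" unfolding c0_def using t0_pos by simp
  have cnnn: "cn \<ge> 0" unfolding cn_def using tn_pos by simp
  have bnn: "betar \<ge> 0" unfolding betar_def using b0 Tpos by simp
  have low: "(\<integral>\<^sup>+y. chainF k ts qL KL n y \<partial>M) \<ge> (\<Prod>j\<in>{1..k}. \<integral>\<^sup>+z. qL j z \<partial>lborel) * ennreal betar ^ (k * (n - 1))"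
    unfolding M_def I_eq
  proof (rule chain_lower[where B=B])
    show "\<And>j z. qL j z \<noteq> 0 \<Longrightarrow> z \<in> B j" unfolding qL_def by (auto simp: indicator_def split: if_splits)
    show "\<And>j i x z. KL j i x z \<noteq> 0 \<Longrightarrow> z \<in> B j" unfolding KL_def by (auto simp: indicator_def split: if_splits)
    show "\<And>j i x. j \<in> {1..k} \<Longrightarrow> x \<in> B j \<Longrightarrow> ennreal betar \<le> (\<integral>\<^sup>+z. KL j i x z \<partial>lborel)"
      by (rule KL_int)
  qed (use n1 dist_ts qL_meas KL_meas in \<open>auto simp: n_def\<close>)
  have p0: "(\<Prod>j\<in>{1..k}. \<integral>\<^sup>+z. qL j z \<partial>lborel) \<ge> (\<Prod>j\<in>{1..k}. ennreal c0)"
    by (rule prod_mono_ennreal) (rule qL_int)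
  have p0': "(\<Prod>j\<in>{1..k}. ennreal c0) = ennreal (c0 ^ k)" by (simp add: ennreal_power c0nn)
  have pw: "chainF k ts qL KL n y * ennreal (cn ^ k) \<le> ennreal (Fu y) * indicator (W_event k g S) y" for y
  proof (cases "chainF k ts qL KL n y = 0")
    case True then show ?thesis by simp
  next
    case False
    have inB: "y (j, ts!i) \<in> B j" if j: "j \<in> {1..k}" and i: "i < n" for j i
    proof (cases "i = 0")
      case True
      have "qL j (y (j, ts!0)) \<noteq> 0" using chainF_nz(1)[OF False j] .
      then show ?thesis using True unfolding qL_def by (auto split: split_indicator_asm)
    next
      case F: False
      have "KL j i (y (j, ts!(i-1))) (y (j, ts!i)) \<noteq> 0" using chainF_nz(2)[OF False j] F i by auto
      then show ?thesis unfolding KL_def by (auto split: split_indicator_asm)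
    qed
    have W: "y \<in> W_event k g S" using Box_W inB by blast
    have eq: "chainF k ts qL KL n y = chainF k ts qU KU n y"
      unfolding chainF_def qL_def KL_def
    proof (intro prod.cong refl arg_cong2[where f="(*)"])
      fix j assume j: "j \<in> {1..k}"
      show "qU j (y (j, ts ! 0)) * indicator (B j) (y (j, ts ! 0)) = qU j (y (j, ts ! 0))"
        using inB[OF j, of 0] n1 by simp
      fix i assume "i \<in> {1..<n}"
      then show "KU j i (y (j, ts ! (i - 1))) (y (j, ts ! i)) * indicator (B j) (y (j, ts ! i)) = KU j i (y (j, ts ! (i - 1))) (y (j, ts ! i))"
        using inB[OF j, of i] by simp
    qed
    have lf: "lastf y \<ge> cn ^ k"
    proof -
      have "(\<Prod>j\<in>{1..k}. cn) \<le> lastf y" unfolding lastf_def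
      proof (rule prod_mono)
        fix j assume j: "j \<in> {1..k}"
        have "\<bar>ap j - y (j, ts!(n-1))\<bar> \<le> E * T ^ 2" using B_dist(2)[OF j inB[OF j, of "n-1"]] n1 by simp
        then have "cn \<le> lst j y" unfolding cn_def lst_def using tn_pos by (rule hk_lower[rotated])
        then show "0 \<le> cn \<and> cn \<le> lst j y" using cnnn by simp
      qed
      then show ?thesis by simp
    qed
    have "chainF k ts qL KL n y * ennreal (cn ^ k) = ennreal (Psi y * cn ^ k)"
      unfolding eq chainU using Psi_nn cnnn by (simp add: ennreal_mult)
    also have "\<dots> \<le> ennreal (Fu y)" unfolding Fu_split using lf Psi_nn
      by (intro ennreal_leI mult_left_mono) auto
    finally show ?thesis using W by simp
  qed
  have "ennreal (c0 ^ k * betar ^ (k * (n - 1)) * cn ^ k) = ennreal (c0 ^ k) * ennreal betar ^ (k * (n - 1)) * ennreal (cn ^ k)"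
    using c0nn cnnn bnn by (simp add: ennreal_mult ennreal_power)
  also have "\<dots> \<le> (\<Prod>j\<in>{1..k}. \<integral>\<^sup>+z. qL j z \<partial>lborel) * ennreal betar ^ (k * (n - 1)) * ennreal (cn ^ k)"
    using p0 p0' by (intro mult_right_mono) auto
  also have "\<dots> \<le> (\<integral>\<^sup>+y. chainF k ts qL KL n y \<partial>M) * ennreal (cn ^ k)"
    using low by (intro mult_right_mono) auto
  also have "\<dots> = (\<integral>\<^sup>+y. chainF k ts qL KL n y * ennreal (cn ^ k) \<partial>M)"
  proof -
    have cm: "chainF k ts qL KL n \<in> borel_measurable M" unfolding M_def I_eq
      by (rule chainF_meas) (use n1 qL_meas KL_meas in \<open>auto simp: n_def\<close>)
    then show ?thesis by (subst nn_integral_multc) auto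
  qed
  also have "\<dots> \<le> (\<integral>\<^sup>+y. ennreal (Fu y) * indicator (W_event k g S) y \<partial>M)"
    using pw by (intro nn_integral_mono) auto
  finally show ?thesis .
qed

lemma s_ex: "\<exists>s. s \<ge> 1 \<and> T = s ^ 4 \<and> sqrt T = s ^ 2 \<and> T powr (5/2) = s ^ 10 \<and> sT = s"
  using sT_props by blast

lemma c_ge:
  assumes t: "sqrt T \<le> t" "t \<le> b0 * T"
  shows "exp (- ((E * T ^ 2) ^ 2) / (2 * t)) / sqrt (2 * pi * t) \<ge> exp (- (E ^ 2 * sT ^ 14 / 2 + 2 * pi * b0 * sT ^ 4))"
proof -
  obtain s where s: "s \<ge> 1" "T = s ^ 4" "sqrt T = s ^ 2" "sT = s" using s_ex by blast
  have tpos: "t > 0" using t sqT1 by linarith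
  have t2: "s ^ 2 \<le> t" "t \<le> b0 * s ^ 4" using t s by auto
  have "(E * T ^ 2) ^ 2 / (2 * t) \<le> (E * T ^ 2) ^ 2 / (2 * s ^ 2)"
    using t2 s tpos by (intro divide_left_mono) auto
  also have "(E * T ^ 2) ^ 2 / (2 * s ^ 2) = E ^ 2 * s ^ 14 / 2" unfolding s(2) using s(1)
    by (simp add: power_mult_distrib power_mult[symmetric] field_simps)
  finally have e1: "exp (- (E ^ 2 * s ^ 14 / 2)) \<le> exp (- ((E * T ^ 2) ^ 2) / (2 * t))" by simp
  have "exp (- (2 * pi * b0 * s ^ 4)) \<le> exp (- (2 * pi * t))" using t2 by simp
  also have "\<dots> \<le> 1 / sqrt (2 * pi * t)" using tpos by (intro inv_sqrt_ge) simp
  finally have e2: "exp (- (2 * pi * b0 * s ^ 4)) \<le> 1 / sqrt (2 * pi * t)" .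
  have "exp (- (E ^ 2 * s ^ 14 / 2 + 2 * pi * b0 * s ^ 4)) = exp (- (E ^ 2 * s ^ 14 / 2)) * exp (- (2 * pi * b0 * s ^ 4))"
    by (simp add: mult_exp_exp)
  also have "\<dots> \<le> exp (- ((E * T ^ 2) ^ 2) / (2 * t)) * (1 / sqrt (2 * pi * t))"
    using e1 e2 by (intro mult_mono) auto
  finally show ?thesis unfolding s(4) by simp
qed

lemma betar_ge: "betar \<ge> exp (- (3/2 + 2 * pi + 2 * pi * b0 * sT ^ 4))"
proof -
  obtain s where s: "s \<ge> 1" "T = s ^ 4" "sT = s" using s_ex by blast
  have x: "2 * pi * (1 + b0 * T) > 0" using b0 Tpos by (simp add: add_pos_pos)
  have h: "exp (- 1) \<le> (1::real) / 2"
  proof -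
    have "(2::real) \<le> exp 1" using exp_ge_add_one_self[of 1] by simp
    then show ?thesis by (simp add: exp_minus field_simps)
  qed
  have "exp (- (3/2 + 2 * pi + 2 * pi * b0 * s ^ 4)) = exp (- 1 / 2) * exp (- 1) * exp (- (2 * pi * (1 + b0 * s ^ 4)))"
    by (simp add: mult_exp_exp algebra_simps)
  also have "\<dots> = exp (- 1 / 2) * exp (- 1) * exp (- (2 * pi * (1 + b0 * T)))" unfolding s(2) ..
  also have "\<dots> \<le> exp (- 1 / 2) * (1 / 2) * (1 / sqrt (2 * pi * (1 + b0 * T)))"
    using h inv_sqrt_ge[OF x] by (intro mult_mono) auto
  also have "\<dots> = betar" unfolding betar_def by simp
  finally show ?thesis unfolding s(3) .
qed

lemma Dlow_ge: "c0 ^ k * betar ^ (k * (n - 1)) * cn ^ k \<ge> exp (- (K1 * sT ^ 14))"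
proof -
  obtain s where s: "s \<ge> 1" "T = s ^ 4" "sT = s" using s_ex by blast
  let ?a = "E ^ 2 * s ^ 14 / 2 + 2 * pi * b0 * s ^ 4"
  let ?b = "3/2 + 2 * pi + 2 * pi * b0 * s ^ 4"
  let ?Z = "real k * (b0 * s ^ 4) * ?b"
  have c0g: "c0 \<ge> exp (- ?a)" unfolding c0_def using c_ge t0_ge t0_le s(3) by auto
  have cng: "cn \<ge> exp (- ?a)" unfolding cn_def using c_ge tn_ge tn_le s(3) by auto
  have bg: "betar \<ge> exp (- ?b)" using betar_ge s(3) by simp
  have bnn: "?b \<ge> 0" using b0 by (simp add: add_nonneg_nonneg)
  have nb: "real (n - 1) \<le> b0 * s ^ 4" using n_le s(2) n1 by (simp add: of_nat_diff)
  have "exp (- (K1 * s ^ 14)) \<le> exp (- (real k * ?a) + - (real k * ?a) + - ?Z)"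
  proof -
    have p4: "s ^ 4 \<le> s ^ 14" and p8: "s ^ 8 \<le> s ^ 14" using s(1) by (auto intro: power_increasing)
    have "real k * ?a + real k * ?a + ?Z
        = real k * (E ^ 2 * s ^ 14 + 4 * pi * b0 * s ^ 4 + b0 * (3/2 + 2 * pi) * s ^ 4 + 2 * pi * b0 ^ 2 * s ^ 8)"
      by (simp add: algebra_simps power2_eq_square power_add[symmetric])
    also have "\<dots> \<le> real k * (E ^ 2 * s ^ 14 + 4 * pi * b0 * s ^ 14 + b0 * (3/2 + 2 * pi) * s ^ 14 + 2 * pi * b0 ^ 2 * s ^ 14)"
      using p4 p8 b0 by (intro mult_left_mono add_mono order_refl) auto
    also have "\<dots> = K1 * s ^ 14" unfolding K1_def by (simp add: algebra_simps)
    finally show ?thesis by simp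
  qed
  also have "\<dots> = exp (- ?a) ^ k * exp (- ?a) ^ k * exp (- ?Z)"
  proof -
    have e: "exp (- ?a) ^ k = exp (- (real k * ?a))" by (subst exp_of_nat_mult[symmetric]) (simp add: algebra_simps)
    show ?thesis unfolding e mult_exp_exp ..
  qed
  also have "exp (- ?Z) \<le> exp (- ?b) ^ (k * (n - 1))"
  proof -
    have "real (n - 1) * ?b \<le> (b0 * s ^ 4) * ?b" using nb bnn by (rule mult_right_mono)
    then have "real k * (real (n - 1) * ?b) \<le> real k * ((b0 * s ^ 4) * ?b)" by (rule mult_left_mono) simp
    then have "real (k * (n - 1)) * ?b \<le> ?Z" by (simp add: mult.assoc)
    moreover have "exp (- ?b) ^ (k * (n - 1)) = exp (- (real (k * (n - 1)) * ?b))"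
      by (subst exp_of_nat_mult[symmetric]) (simp add: algebra_simps)
    ultimately show ?thesis by simp
  qed
  finally have "exp (- (K1 * s ^ 14)) \<le> exp (- ?a) ^ k * exp (- ?a) ^ k * exp (- ?b) ^ (k * (n - 1))"
    by (simp add: mult_left_mono)
  also have "\<dots> \<le> c0 ^ k * cn ^ k * betar ^ (k * (n - 1))"
  proof -
    have "0 \<le> c0" "0 \<le> cn" using c0g cng by (meson exp_ge_zero order_trans)+
    then show ?thesis using c0g cng bg by (intro mult_mono power_mono) auto
  qed
  finally show ?thesis unfolding s(3) by (simp add: mult_ac)
qed

definition "phi j = lam1 * T + (real k - real j) * lam0 * sqrt T"
definition "hv i = phi (fst i)"
definition "sh y = restrict (\<lambda>i. y i + hv i) I"
definition "ush y = restrict (\<lambda>i. y i + - hv i) I"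
definition "Ap = W_event k g S \<inter> {y. \<forall>j\<in>{1..k}. y (j, ts!0) \<le> am j + R * sqrt t0 \<and> y (j, ts!(n-1)) \<le> ap j + R * sqrt tn}"

lemma Phi_nn: "Phi \<ge> 0" unfolding Phi_def using lam0 lam1 by simp

lemma phi_bounds: "j \<in> {1..k} \<Longrightarrow> 0 \<le> phi j \<and> phi j \<le> Phi * sT ^ 4"
proof -
  assume j: "j \<in> {1..k}"
  obtain s where s: "s \<ge> 1" "T = s ^ 4" "sqrt T = s ^ 2" "sT = s" using s_ex by blast
  have kj: "0 \<le> real k - real j" "real k - real j \<le> real k" using j by auto
  have "(real k - real j) * lam0 * sqrt T \<ge> 0" using kj lam0 Tpos by simp
  then have lo: "0 \<le> phi j" unfolding phi_def using lam1 Tpos by simp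
  have "(real k - real j) * lam0 * sqrt T \<le> real k * lam0 * T"
    using kj lam0 sqT_le sqT1 by (intro mult_mono) auto
  then have "phi j \<le> lam1 * T + real k * lam0 * T" unfolding phi_def by simp
  also have "\<dots> = Phi * sT ^ 4" unfolding Phi_def using s by (simp add: algebra_simps)
  finally show ?thesis using lo by simp
qed

lemma sh_coord: "(j, p) \<in> I \<Longrightarrow> sh y (j, p) = y (j, p) + phi j" unfolding sh_def hv_def by simp

lemma ts_I: "j \<in> {1..k} \<Longrightarrow> i < n \<Longrightarrow> (j, ts!i) \<in> I" unfolding I_def using ts_in by auto

lemma Gj_shift:
  assumes j: "j \<in> {1..k}" and y: "y \<in> Ap"
  shows "Gj j (sh y) \<ge> exp (- (2 * ((R0 * Phi + Phi ^ 2 / 2) * sT ^ 10))) * Gj j y"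
proof -
  obtain s where s: "s \<ge> 1" "T = s ^ 4" "sqrt T = s ^ 2" "sT = s" using s_ex by blast
  let ?c = "(R0 * Phi + Phi ^ 2 / 2) * sT ^ 10"
  have yb: "y (j, ts!0) \<le> am j + R * sqrt t0" "y (j, ts!(n-1)) \<le> ap j + R * sqrt tn"
    using y j unfolding Ap_def by auto
  have ph: "0 \<le> phi j" "phi j \<le> Phi * s ^ 4" using phi_bounds[OF j] s by auto
  have c1: "first j (sh y) = first j y * exp (- (2 * (y (j, ts!0) - am j) * phi j + phi j ^ 2) / (2 * t0))"
  proof -
    have "first j (sh y) = heat_kernel t0 ((y (j, ts!0) - am j) + phi j)"
      unfolding first_def using sh_coord[OF ts_I[OF j, of 0]] n1 by (simp add: algebra_simps)
    also have "\<dots> = first j y * exp (- (2 * (y (j, ts!0) - am j) * phi j + phi j ^ 2) / (2 * t0))"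
      unfolding first_def using t0_pos by (rule hk_shift)
    finally show ?thesis .
  qed
  have c2: "lst j (sh y) = lst j y * exp (- (2 * (y (j, ts!(n-1)) - ap j) * phi j + phi j ^ 2) / (2 * tn))"
  proof -
    have "lst j (sh y) = heat_kernel tn ((ap j - y (j, ts!(n-1))) + (- phi j))"
      unfolding lst_def using sh_coord[OF ts_I[OF j, of "n-1"]] n1 by (simp add: algebra_simps)
    also have "\<dots> = lst j y * exp (- (2 * (ap j - y (j, ts!(n-1))) * (- phi j) + (- phi j) ^ 2) / (2 * tn))"
      unfolding lst_def using tn_pos by (rule hk_shift)
    finally show ?thesis by (simp add: algebra_simps)
  qed
  have c3: "mid j (sh y) = mid j y"
    unfolding mid_def
  proof (intro prod.cong refl)
    fix i assume i: "i \<in> {1..<n}"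
    then have "i < n" "i - 1 < n" by auto
    then show "heat_kernel (dl i) (sh y (j, ts ! i) - sh y (j, ts ! (i - 1))) = heat_kernel (dl i) (y (j, ts ! i) - y (j, ts ! (i - 1)))"
      using sh_coord[OF ts_I[OF j]] by simp
  qed
  have e1: "(2 * (y (j, ts!0) - am j) * phi j + phi j ^ 2) / (2 * t0) \<le> ?c"
    unfolding s(4)
  proof (rule expo_bound[OF s(1) _ _ ph R0_nn])
    show "s ^ 2 \<le> t0" using t0_ge s by simp
    show "y (j, ts ! 0) - am j \<le> R0 * s ^ 7 * sqrt t0" using yb s unfolding R_def by simp
  qed
  have e2: "(2 * (y (j, ts!(n-1)) - ap j) * phi j + phi j ^ 2) / (2 * tn) \<le> ?c"
    unfolding s(4)
  proof (rule expo_bound[OF s(1) _ _ ph R0_nn])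
    show "s ^ 2 \<le> tn" using tn_ge s by simp
    show "y (j, ts ! (n-1)) - ap j \<le> R0 * s ^ 7 * sqrt tn" using yb s unfolding R_def by simp
  qed
  have "exp (- (2 * ?c)) * Gj j y = (first j y * exp (- ?c)) * mid j y * (lst j y * exp (- ?c))"
  proof -
    have "exp (- (2 * ?c)) = exp (- ?c) * exp (- ?c)" by (simp add: mult_exp_exp)
    then show ?thesis unfolding Gj_split by (simp add: mult_ac)
  qed
  also have "\<dots> \<le> first j (sh y) * mid j (sh y) * lst j (sh y)"
  proof -
    have f1: "exp (- ?c) \<le> exp (- (2 * (y (j, ts!0) - am j) * phi j + phi j ^ 2) / (2 * t0))"
    proof -
      have "- ?c \<le> - ((2 * (y (j, ts!0) - am j) * phi j + phi j ^ 2) / (2 * t0))" using e1 by linarith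
      also have "- ((2 * (y (j, ts!0) - am j) * phi j + phi j ^ 2) / (2 * t0)) = - (2 * (y (j, ts!0) - am j) * phi j + phi j ^ 2) / (2 * t0)" by (rule minus_divide_left)
      finally show ?thesis by simp
    qed
    have f2: "exp (- ?c) \<le> exp (- (2 * (y (j, ts!(n-1)) - ap j) * phi j + phi j ^ 2) / (2 * tn))"
    proof -
      have "- ?c \<le> - ((2 * (y (j, ts!(n-1)) - ap j) * phi j + phi j ^ 2) / (2 * tn))" using e2 by linarith
      also have "- ((2 * (y (j, ts!(n-1)) - ap j) * phi j + phi j ^ 2) / (2 * tn)) = - (2 * (y (j, ts!(n-1)) - ap j) * phi j + phi j ^ 2) / (2 * tn)" by (rule minus_divide_left)
      finally show ?thesis by simp
    qed
    show ?thesis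
      unfolding c1 c2 c3 using f1 f2 first_nn[of j y] lst_nn[of j y] mid_nn[of j y]
      by (intro mult_mono mult_left_mono) (auto intro!: mult_nonneg_nonneg)
  qed
  also have "\<dots> = Gj j (sh y)" unfolding Gj_split ..
  finally show ?thesis .
qed

lemma Gj_nn: "Gj j y \<ge> 0" unfolding Gj_split by (intro mult_nonneg_nonneg first_nn mid_nn lst_nn)

lemma Fu_shift:
  assumes y: "y \<in> Ap"
  shows "Fu (sh y) \<ge> exp (- (C3 * sT ^ 10)) * Fu y"
proof -
  let ?e = "exp (- (2 * ((R0 * Phi + Phi ^ 2 / 2) * sT ^ 10)))"
  have "exp (- (C3 * sT ^ 10)) * Fu y = (\<Prod>j\<in>{1..k}. ?e * Gj j y)"
  proof -
    have "?e ^ k = exp (- (C3 * sT ^ 10))" unfolding C3_def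
      by (subst exp_of_nat_mult[symmetric]) (simp add: algebra_simps)
    then show ?thesis unfolding Fu_def prod.distrib by simp
  qed
  also have "\<dots> \<le> (\<Prod>j\<in>{1..k}. Gj j (sh y))"
    using Gj_shift[OF _ y] Gj_nn by (intro prod_mono) auto
  also have "\<dots> = Fu (sh y)" unfolding Fu_def ..
  finally show ?thesis .
qed

lemma pred_ind:
  assumes [measurable]: "Measurable.pred M (\<lambda>y. y \<in> X)"
  shows "(\<lambda>y. ennreal (Fu y) * indicator X y) \<in> borel_measurable M"
proof -
  note [measurable] = Fu_meas
  have "(\<lambda>y. ennreal (Fu y) * (if y \<in> X then 1 else 0)) \<in> borel_measurable M" by measurable
  then show ?thesis unfolding indicator_def of_bool_def .
qed

lemma W_pred: "Measurable.pred M (\<lambda>y. y \<in> W_event k g S)"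
  unfolding W_event_def M_def I_def using finS k1 apply simp
  apply (intro pred_intros_finite pred_intros_logic)
  apply auto
  apply measurable
  done

lemma G_pred: "Measurable.pred M (\<lambda>y. y \<in> G_event k mu lam0 lam1 T g S)"
  unfolding G_event_def M_def I_def using finS k1 apply simp
  apply (intro pred_intros_finite pred_intros_logic)
  apply auto
  apply measurable
  done

lemma coordI: "j \<in> {1..k} \<Longrightarrow> i < n \<Longrightarrow> (\<lambda>y. y (j, ts!i)) \<in> borel_measurable M"
  by (rule coord)

lemma Tail1_pred: "j \<in> {1..k} \<Longrightarrow> Measurable.pred M (\<lambda>y. y \<in> Tail1 j)"
proof -
  assume j: "j \<in> {1..k}"
  note [measurable] = coordI[OF j, of 0]
  show ?thesis unfolding Tail1_def using n1 by simp
qed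

lemma Tail2_pred: "j \<in> {1..k} \<Longrightarrow> Measurable.pred M (\<lambda>y. y \<in> Tail2 j)"
proof -
  assume j: "j \<in> {1..k}"
  have "n - 1 < n" using n1 by simp
  note [measurable] = coordI[OF j this]
  show ?thesis unfolding Tail2_def by measurable
qed

lemma Ap_pred: "Measurable.pred M (\<lambda>y. y \<in> Ap)"
proof -
  have a: "Measurable.pred M (\<lambda>y. \<forall>j\<in>{1..k}. y (j, ts!0) \<le> am j + R * sqrt t0 \<and> y (j, ts!(n-1)) \<le> ap j + R * sqrt tn)"
  proof (intro pred_intros_finite pred_intros_logic)
    fix j assume j: "j \<in> {1..k}"
    have "n - 1 < n" using n1 by simp
    note [measurable] = coordI[OF j this] coordI[OF j, of 0]
    show "Measurable.pred M (\<lambda>y. y (j, ts!0) \<le> am j + R * sqrt t0)" using n1 by simp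
    show "Measurable.pred M (\<lambda>y. y (j, ts!(n-1)) \<le> ap j + R * sqrt tn)" by measurable
  qed simp
  show ?thesis unfolding Ap_def using W_pred a by simp
qed

definition "Nn X = (\<integral>\<^sup>+y. ennreal (Fu y) * indicator X y \<partial>M)"

lemma Nn_le_1: "Nn X \<le> 1"
proof -
  have "ennreal (Fu y) * indicator X y \<le> ennreal (Psi y)" for y
  proof (cases "y \<in> X")
    case True
    then show ?thesis using Fu_le_Psi[of y] by (simp add: ennreal_leI)
  next
    case False then show ?thesis by simp
  qed
  then have "Nn X \<le> (\<integral>\<^sup>+y. ennreal (Psi y) \<partial>M)" unfolding Nn_def
    by (intro nn_integral_mono)
  then show ?thesis using Psi_int by (rule order_trans)
qed

lemma D_ge: "Nn (W_event k g S) \<ge> ennreal (exp (- (K1 * sT ^ 14)))"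
proof -
  have "ennreal (exp (- (K1 * sT ^ 14))) \<le> ennreal (c0 ^ k * betar ^ (k * (n - 1)) * cn ^ k)"
    by (rule ennreal_leI[OF Dlow_ge])
  also have "\<dots> \<le> Nn (W_event k g S)" unfolding Nn_def by (rule lower_W)
  finally show ?thesis .
qed

lemma sum_const_enn: "a \<ge> 0 \<Longrightarrow> (\<Sum>j\<in>{1..k}. ennreal a + ennreal a) = ennreal (2 * real k * a)"
proof -
  assume a: "a \<ge> 0"
  have "(\<Sum>j\<in>{1..k}. ennreal a + ennreal a) = (\<Sum>j\<in>{1..k}. ennreal (a + a))"
    using a by (simp only: ennreal_plus)
  also have "\<dots> = of_nat k * ennreal (a + a)" by (simp only: sum_constant card_atLeastAtMost diff_Suc_1)
  also have "\<dots> = ennreal (real k) * ennreal (a + a)" by (simp only: ennreal_of_nat_eq_real_of_nat)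
  also have "\<dots> = ennreal (real k * (a + a))" using a by (intro ennreal_mult[symmetric]) auto
  also have "real k * (a + a) = 2 * real k * a" by simp
  finally show ?thesis .
qed

lemma D_le: "Nn (W_event k g S) \<le> Nn Ap + ennreal (2 * real k * (sqrt 2 * exp (- (R ^ 2) / 4)))"
proof -
  let ?f = "\<lambda>X y. ennreal (Fu y) * indicator X y"
  have pw: "?f (W_event k g S) y \<le> ?f Ap y + (\<Sum>j\<in>{1..k}. ?f (Tail1 j) y + ?f (Tail2 j) y)" for y
  proof (cases "y \<in> W_event k g S")
    case False then show ?thesis by simp
  next
    case W: True
    show ?thesis
    proof (cases "y \<in> Ap")
      case True then show ?thesis using W by simp
    next
      case False
      then obtain j where j: "j \<in> {1..k}" and jt: "y \<in> Tail1 j \<or> y \<in> Tail2 j"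
        using W unfolding Ap_def Tail1_def Tail2_def by (auto simp: not_le)
      have "?f (W_event k g S) y \<le> ?f (Tail1 j) y + ?f (Tail2 j) y"
        using jt W by (auto simp: indicator_def)
      also have "\<dots> \<le> (\<Sum>j\<in>{1..k}. ?f (Tail1 j) y + ?f (Tail2 j) y)"
        using j by (intro member_le_sum) auto
      also have "\<dots> \<le> ?f Ap y + (\<Sum>j\<in>{1..k}. ?f (Tail1 j) y + ?f (Tail2 j) y)" by simp
      finally show ?thesis .
    qed
  qed
  have m1: "?f Ap \<in> borel_measurable M" using pred_ind[OF Ap_pred] .
  have m2: "\<And>j. j \<in> {1..k} \<Longrightarrow> ?f (Tail1 j) \<in> borel_measurable M" using pred_ind[OF Tail1_pred] by auto
  have m3: "\<And>j. j \<in> {1..k} \<Longrightarrow> ?f (Tail2 j) \<in> borel_measurable M" using pred_ind[OF Tail2_pred] by auto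
  have "Nn (W_event k g S) \<le> (\<integral>\<^sup>+y. ?f Ap y + (\<Sum>j\<in>{1..k}. ?f (Tail1 j) y + ?f (Tail2 j) y) \<partial>M)"
    unfolding Nn_def using pw by (intro nn_integral_mono) auto
  also have "\<dots> = Nn Ap + (\<Sum>j\<in>{1..k}. Nn (Tail1 j) + Nn (Tail2 j))"
  proof -
    have ms: "(\<lambda>y. \<Sum>j\<in>{1..k}. ?f (Tail1 j) y + ?f (Tail2 j) y) \<in> borel_measurable M"
      using m2 m3 by (intro borel_measurable_sum borel_measurable_add) auto
    have "(\<integral>\<^sup>+y. ?f Ap y + (\<Sum>j\<in>{1..k}. ?f (Tail1 j) y + ?f (Tail2 j) y) \<partial>M)
        = (\<integral>\<^sup>+y. ?f Ap y \<partial>M) + (\<integral>\<^sup>+y. (\<Sum>j\<in>{1..k}. ?f (Tail1 j) y + ?f (Tail2 j) y) \<partial>M)"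
      using m1 ms by (rule nn_integral_add)
    also have "(\<integral>\<^sup>+y. (\<Sum>j\<in>{1..k}. ?f (Tail1 j) y + ?f (Tail2 j) y) \<partial>M)
        = (\<Sum>j\<in>{1..k}. \<integral>\<^sup>+y. ?f (Tail1 j) y + ?f (Tail2 j) y \<partial>M)"
      using m2 m3 by (intro nn_integral_sum borel_measurable_add) auto
    also have "\<dots> = (\<Sum>j\<in>{1..k}. Nn (Tail1 j) + Nn (Tail2 j))"
      unfolding Nn_def using m2 m3 by (intro sum.cong refl nn_integral_add) auto
    finally show ?thesis unfolding Nn_def .
  qed
  also have "\<dots> \<le> Nn Ap + (\<Sum>j\<in>{1..k}. ennreal (sqrt 2 * exp (- (R ^ 2) / 4)) + ennreal (sqrt 2 * exp (- (R ^ 2) / 4)))"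
    unfolding Nn_def using tail1_bound tail2_bound by (intro add_left_mono sum_mono add_mono) auto
  also have "\<dots> = Nn Ap + ennreal (2 * real k * (sqrt 2 * exp (- (R ^ 2) / 4)))"
    by (subst sum_const_enn) auto
  finally show ?thesis .
qed

lemma tails_small: "2 * real k * (sqrt 2 * exp (- (R ^ 2) / 4)) \<le> exp (- (K1 * sT ^ 14)) / 2"
proof -
  obtain s where s: "s \<ge> 1" "sT = s" using s_ex by blast
  have R2: "R ^ 2 / 4 = (K1 + 6 * real k) * s ^ 14"
  proof -
    have "R0 ^ 2 = 4 * (K1 + 6 * real k)" unfolding R0_def using K1_nn by (simp add: power_mult_distrib)
    moreover have "(s ^ 7) ^ 2 = s ^ 14" by (simp add: power_mult[symmetric])
    ultimately show ?thesis unfolding R_def s(2) by (simp add: power_mult_distrib)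
  qed
  have s14: "s ^ 14 \<ge> 1" using s by (simp add: one_le_power)
  have sq: "sqrt 2 \<le> (3/2::real)" by (rule real_le_lsqrt) (auto simp: power2_eq_square)
  have "4 * sqrt 2 * real k \<le> 4 * (3/2) * real k" using sq by (intro mult_right_mono mult_left_mono) auto
  also have "\<dots> = 6 * real k" by simp
  also have "\<dots> \<le> 6 * real k * s ^ 14" using s14 by (simp add: mult_le_cancel_left1)
  also have "\<dots> \<le> exp (6 * real k * s ^ 14)" using exp_ge_add_one_self[of "6 * real k * s ^ 14"] by linarith
  finally have a: "4 * sqrt 2 * real k \<le> exp (6 * real k * s ^ 14)" .
  have "2 * real k * (sqrt 2 * exp (- (R ^ 2) / 4)) = 2 * real k * sqrt 2 * exp (- (6 * real k * s ^ 14)) * exp (- (K1 * s ^ 14))"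
    unfolding minus_divide_left[symmetric] R2 by (simp add: mult_exp_exp algebra_simps)
  also have "\<dots> \<le> (1/2) * exp (- (K1 * s ^ 14))"
  proof (rule mult_right_mono)
    have "2 * real k * sqrt 2 * exp (- (6 * real k * s ^ 14)) = (4 * sqrt 2 * real k) / exp (6 * real k * s ^ 14) / 2"
      by (simp add: exp_minus field_simps)
    also have "\<dots> \<le> 1 / 2" using a by (simp add: divide_le_eq mult_ac)
    finally show "2 * real k * sqrt 2 * exp (- (6 * real k * s ^ 14)) \<le> 1 / 2" .
  qed simp
  finally show ?thesis unfolding s(2) by simp
qed

lemma NAp_ge: "ennreal (1/2) * Nn (W_event k g S) \<le> Nn Ap"
proof -
  let ?D = "Nn (W_event k g S)"
  have Dfin: "?D \<noteq> \<top>" using Nn_le_1[of "W_event k g S"] by (auto simp: top_unique)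
  have Afin: "Nn Ap \<noteq> \<top>" using Nn_le_1[of Ap] by (auto simp: top_unique)
  define d where "d = enn2real ?D"
  define a where "a = enn2real (Nn Ap)"
  have Dd: "?D = ennreal d" unfolding d_def using Dfin by (simp add: ennreal_enn2real_if)
  have Aa: "Nn Ap = ennreal a" unfolding a_def using Afin by (simp add: ennreal_enn2real_if)
  have d0: "d \<ge> 0" "a \<ge> 0" unfolding d_def a_def by auto
  let ?x = "2 * real k * (sqrt 2 * exp (- (R ^ 2) / 4))"
  have x0: "?x \<ge> 0" by simp
  have "ennreal d \<le> ennreal a + ennreal ?x" using D_le Dd Aa by simp
  then have h1: "d \<le> a + ?x" using d0 x0 by (simp add: ennreal_plus[symmetric] del: ennreal_plus)
  have "ennreal (exp (- (K1 * sT ^ 14))) \<le> ennreal d" using D_ge Dd by simp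
  then have h2: "exp (- (K1 * sT ^ 14)) \<le> d" using d0 by (simp add: ennreal_le_iff)
  have "d / 2 \<le> a" using h1 h2 tails_small by linarith
  then have "ennreal (1/2 * d) \<le> ennreal a" by (intro ennreal_leI) simp
  moreover have "ennreal (1/2) * ennreal d = ennreal (1/2 * d)" using d0 by (intro ennreal_mult[symmetric]) auto
  ultimately show ?thesis unfolding Dd Aa by simp
qed

lemma space_M: "y \<in> space M \<Longrightarrow> restrict y I = y"
  unfolding M_def by (auto simp: space_PiM PiE_def extensional_def restrict_def fun_eq_iff)

lemma ush_coord: "(j, p) \<in> I \<Longrightarrow> ush y (j, p) = y (j, p) - phi j" unfolding ush_def hv_def by simp

lemma ush_GW:
  assumes y: "ush y \<in> Ap"
  shows "y \<in> G_event k mu lam0 lam1 T g S \<inter> W_event k g S"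
proof -
  have xW: "ush y \<in> W_event k g S" using y unfolding Ap_def by simp
  have phik: "phi k = lam1 * T" unfolding phi_def by simp
  have phid: "phi j - phi (j+1) = lam0 * sqrt T" for j unfolding phi_def by (simp add: algebra_simps)
  have A: "y (k, p) - g p > lam1 * T" if p: "p \<in> S" for p
  proof -
    have "ush y (k, p) > g p" using xW p unfolding W_event_def by auto
    moreover have "(k, p) \<in> I" using p k1 unfolding I_def by auto
    ultimately show ?thesis using ush_coord phik by simp
  qed
  have B: "y (j, p) - y (j+1, p) > lam0 * sqrt T" if p: "p \<in> S" and j: "j \<in> {1..k-1}" for p j
  proof -
    have "ush y (j, p) > ush y (j+1, p)" using xW p j unfolding W_event_def by auto
    moreover have "(j, p) \<in> I" "(j+1, p) \<in> I" using p j unfolding I_def by auto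
    ultimately show ?thesis using ush_coord phid[of j] by simp
  qed
  have l1: "lam1 * T \<ge> (1 + mu) / 2 * lam1 * T"
  proof -
    have "(1 + mu) / 2 \<le> 1" using mu by simp
    then have "(1 + mu) / 2 * (lam1 * T) \<le> 1 * (lam1 * T)" using lam1 Tpos by (intro mult_right_mono) auto
    then show ?thesis by (simp add: mult_ac)
  qed
  have l0: "lam0 * sqrt T \<ge> (1 + mu) / 2 * lam0 * sqrt T"
  proof -
    have "(1 + mu) / 2 \<le> 1" using mu by simp
    then have "(1 + mu) / 2 * (lam0 * sqrt T) \<le> 1 * (lam0 * sqrt T)" using lam0 Tpos by (intro mult_right_mono) auto
    then show ?thesis by (simp add: mult_ac)
  qed
  have p0: "lam1 * T > 0" "lam0 * sqrt T > 0" using lam1 lam0 Tpos by auto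
  have W: "y \<in> W_event k g S" unfolding W_event_def
  proof (intro CollectI ballI conjI)
    fix p assume p: "p \<in> S"
    show "y (k, p) > g p" using A[OF p] p0 by linarith
    fix j assume j: "j \<in> {1..k-1}"
    show "y (j, p) > y (j+1, p)" using B[OF p j] p0 by linarith
  qed
  have G: "y \<in> G_event k mu lam0 lam1 T g S" unfolding G_event_def
  proof (intro CollectI ballI conjI)
    fix p assume p: "p \<in> S"
    show "y (k, p) - g p \<ge> (1 + mu) / 2 * lam1 * T" using A[OF p] l1 by linarith
    fix j assume j: "j \<in> {1..k-1}"
    show "y (j, p) - y (j+1, p) \<ge> (1 + mu) / 2 * lam0 * sqrt T" using B[OF p j] l0 by linarith
  qed
  show ?thesis using W G by simp
qed

lemma N_ge: "Nn (G_event k mu lam0 lam1 T g S \<inter> W_event k g S) \<ge> ennreal (exp (- (C3 * sT ^ 10))) * Nn Ap"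
proof -
  let ?GW = "G_event k mu lam0 lam1 T g S \<inter> W_event k g S"
  define F where "F y = ennreal (Fu y) * indicator Ap (ush y)" for y
  have ushm: "ush \<in> measurable M M" unfolding ush_def[abs_def] M_def by (rule shift_meas)
  have indm: "(indicator Ap :: _ \<Rightarrow> ennreal) \<in> borel_measurable M"
  proof -
    note [measurable] = Ap_pred
    have "(\<lambda>y. if y \<in> Ap then 1 else 0 :: ennreal) \<in> borel_measurable M" by measurable
    then show ?thesis unfolding indicator_def[abs_def] of_bool_def .
  qed
  have Fm: "F \<in> borel_measurable M" unfolding F_def[abs_def]
    using Fu_meas measurable_comp[OF ushm indm] by (simp add: comp_def)
  have I1: "(\<integral>\<^sup>+y. F y \<partial>M) \<le> Nn ?GW" unfolding Nn_def F_def
  proof (rule nn_integral_mono)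
    fix y
    show "ennreal (Fu y) * indicator Ap (ush y) \<le> ennreal (Fu y) * indicator ?GW y"
    proof (cases "ush y \<in> Ap")
      case True
      then have "y \<in> ?GW" by (rule ush_GW)
      then show ?thesis using True by simp
    qed simp
  qed
  have I2: "(\<integral>\<^sup>+y. F y \<partial>M) = (\<integral>\<^sup>+y. F (sh y) \<partial>M)"
    unfolding sh_def M_def using shift_nn_integral[OF finI Fm[unfolded M_def], of hv] by simp
  have I3: "(\<integral>\<^sup>+y. F (sh y) \<partial>M) = (\<integral>\<^sup>+y. ennreal (Fu (sh y)) * indicator Ap y \<partial>M)"
  proof (rule nn_integral_cong)
    fix y assume y: "y \<in> space M"
    have "ush (sh y) = restrict y I" unfolding ush_def sh_def by (auto simp: restrict_def fun_eq_iff)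
    then have "ush (sh y) = y" using space_M[OF y] by simp
    then show "F (sh y) = ennreal (Fu (sh y)) * indicator Ap y" unfolding F_def by simp
  qed
  have I4: "(\<integral>\<^sup>+y. ennreal (Fu (sh y)) * indicator Ap y \<partial>M) \<ge> (\<integral>\<^sup>+y. ennreal (exp (- (C3 * sT ^ 10))) * (ennreal (Fu y) * indicator Ap y) \<partial>M)"
  proof (rule nn_integral_mono)
    fix y
    show "ennreal (exp (- (C3 * sT ^ 10))) * (ennreal (Fu y) * indicator Ap y) \<le> ennreal (Fu (sh y)) * indicator Ap y"
    proof (cases "y \<in> Ap")
      case True
      have "ennreal (exp (- (C3 * sT ^ 10))) * ennreal (Fu y) = ennreal (exp (- (C3 * sT ^ 10)) * Fu y)"
        using Fu_nn by (intro ennreal_mult[symmetric]) auto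
      also have "\<dots> \<le> ennreal (Fu (sh y))" using Fu_shift[OF True] by (rule ennreal_leI)
      finally show ?thesis using True by simp
    qed simp
  qed
  have I5: "(\<integral>\<^sup>+y. ennreal (exp (- (C3 * sT ^ 10))) * (ennreal (Fu y) * indicator Ap y) \<partial>M) = ennreal (exp (- (C3 * sT ^ 10))) * Nn Ap"
    unfolding Nn_def using pred_ind[OF Ap_pred] by (rule nn_integral_cmult)
  show ?thesis unfolding I5[symmetric] using I1 I2 I3 I4 by simp
qed

definition "Z = (\<Prod>j\<in>{1..k}. heat_kernel (r - l) (ap j - am j))"

lemma Z_pos: "Z > 0"
  unfolding Z_def heat_kernel_def using lr by (intro prod_pos) auto

lemma free_dens_eq: "free_dens k l r am ap S y = Fu y / Z"
  unfolding free_dens_def bridge_dens_def Fu_def Z_def Gj_def ts_def[symmetric]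
  by (rule prod_dividef)

lemma P_free_eq:
  assumes "Measurable.pred M (\<lambda>y. y \<in> X)"
  shows "P_free k l r am ap S X = ennreal (1 / Z) * Nn X"
proof -
  have "P_free k l r am ap S X = (\<integral>\<^sup>+y. ennreal (1 / Z) * (ennreal (Fu y) * indicator X y) \<partial>M)"
    unfolding P_free_def M_eq
  proof (rule nn_integral_cong)
    fix y
    have "ennreal (free_dens k l r am ap S y) = ennreal (1 / Z) * ennreal (Fu y)"
      unfolding free_dens_eq using Z_pos Fu_nn[of y] by (subst ennreal_mult[symmetric]) (auto simp: field_simps)
    then show "ennreal (free_dens k l r am ap S y) * indicator X y = ennreal (1 / Z) * (ennreal (Fu y) * indicator X y)"
      by (simp add: mult.assoc)
  qed
  also have "\<dots> = ennreal (1 / Z) * Nn X"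
    unfolding Nn_def using pred_ind[OF assms] by (rule nn_integral_cmult)
  finally show ?thesis .
qed

lemma P_cond_bound: "P_cond k l r am ap g S (G_event k mu lam0 lam1 T g S) \<ge> ennreal (1/2 * exp (- (C3 * sT ^ 10)))"
proof -
  let ?GW = "G_event k mu lam0 lam1 T g S \<inter> W_event k g S"
  let ?W = "W_event k g S"
  let ?c = "ennreal (1 / Z)"
  let ?x = "ennreal (1/2 * exp (- (C3 * sT ^ 10)))"
  have c0: "?c \<noteq> 0" "?c \<noteq> \<top>" using Z_pos by auto
  have predGW: "Measurable.pred M (\<lambda>y. y \<in> ?GW)" using G_pred W_pred by simp
  have "P_cond k l r am ap g S (G_event k mu lam0 lam1 T g S) = (Nn ?GW * ?c) / (Nn ?W * ?c)"
    unfolding P_cond_def P_free_eq[OF predGW] P_free_eq[OF W_pred] by (simp add: mult.commute)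
  also have "\<dots> = Nn ?GW / Nn ?W" using c0 by (intro divide_mult_eq) (auto simp: infinity_ennreal_def)
  finally have e: "P_cond k l r am ap g S (G_event k mu lam0 lam1 T g S) = Nn ?GW / Nn ?W" .
  have D0: "Nn ?W \<noteq> 0"
  proof -
    have "ennreal (exp (- (K1 * sT ^ 14))) > 0" by simp
    then show ?thesis using D_ge by (metis not_less zero_less_iff_neq_zero order_less_le_trans)
  qed
  have Dt: "Nn ?W < \<top>" using Nn_le_1[of ?W] by (simp add: order_le_less_trans)
  have key: "?x * Nn ?W \<le> Nn ?GW"
  proof -
    have sp: "?x = ennreal (1/2) * ennreal (exp (- (C3 * sT ^ 10)))" by (intro ennreal_mult) auto
    have "?x * Nn ?W = ennreal (exp (- (C3 * sT ^ 10))) * (ennreal (1/2) * Nn ?W)"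
      unfolding sp by (simp only: mult_ac)
    also have "\<dots> \<le> ennreal (exp (- (C3 * sT ^ 10))) * Nn Ap"
      using NAp_ge by (intro mult_left_mono) auto
    also have "\<dots> \<le> Nn ?GW" by (rule N_ge)
    finally show ?thesis .
  qed
  have "\<not> (Nn ?GW / Nn ?W < ?x)"
    unfolding divide_less_ennreal[OF D0 Dt] using key by (simp add: not_less)
  then show ?thesis unfolding e by (simp add: not_less)
qed

end

definition "C3g k b0 b1 b2 lam0 lam1 =
  2 * real k * (2 * sqrt (real k * ((b1 * b0 + b2 + 2 * real k + 2) ^ 2 + 4 * pi * b0 + b0 * (3/2 + 2 * pi) + 2 * pi * b0 ^ 2) + 6 * real k)
     * (lam1 + real k * lam0) + (lam1 + real k * lam0) ^ 2 / 2)"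

lemma (in ctx) C3_eq: "C3 = C3g k b0 b1 b2 lam0 lam1"
  unfolding C3_def C3g_def R0_def K1_def E_def Phi_def ..

lemma (in ctx) C3_nn: "C3 \<ge> 0"
  unfolding C3_def using R0_nn Phi_nn by simp


theorem mainTheorem8:
  fixes k :: nat and b0 b1 b2 lam0 lam1 \<mu> :: real
  assumes "k \<ge> 1"
    and "b0 > 0" "b1 > 0" "b2 > 0" "lam0 > 0" "lam1 > 0"
    and "0 < \<mu>" "\<mu> < 1"
  shows "\<exists>C > 0. \<forall>T l r (am :: nat \<Rightarrow> real) (ap :: nat \<Rightarrow> real) (g :: real \<Rightarrow> real) (P :: real set).
     T \<ge> 10 \<and> l < r \<and> finite P \<and> P \<subseteq> {l<..<r}
     \<and> P \<inter> {l + sqrt T .. r - sqrt T} \<noteq> {}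
     \<and> g l = 0 \<and> g r = 0
     \<and> r - l \<le> b0 * T \<and> real (card P) \<le> b0 * T
     \<and> (\<forall>x\<in>{l..r}. \<forall>y\<in>{l..r}. \<bar>g x - g y\<bar> \<le> b1 * T * \<bar>x - y\<bar>)
     \<and> (\<forall>j\<in>{1..k-1}. am j - am (j+1) \<ge> lam0 * sqrt T \<and> ap j - ap (j+1) \<ge> lam0 * sqrt T)
     \<and> am k - g l \<ge> lam1 * T \<and> ap k - g r \<ge> lam1 * T
     \<and> am 1 - g l \<le> b2 * T ^ 2 \<and> ap 1 - g r \<le> b2 * T ^ 2
     \<longrightarrow> P_cond k l r am ap g (P \<inter> {l + sqrt T .. r - sqrt T})
            (G_event k \<mu> lam0 lam1 T g (P \<inter> {l + sqrt T .. r - sqrt T}))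
         \<ge> ennreal (inverse C * exp (- C * T powr (5/2)))"
proof -
  define C where "C = 2 + C3g k b0 b1 b2 lam0 lam1"
  have C3g_nn: "C3g k b0 b1 b2 lam0 lam1 \<ge> 0"
    unfolding C3g_def using assms by (intro mult_nonneg_nonneg add_nonneg_nonneg) auto
  have Cpos: "C > 0" unfolding C_def using C3g_nn by simp
  show ?thesis
  proof (intro exI[of _ C] conjI allI impI)
    show "C > 0" by (rule Cpos)
    fix T l r and am ap :: "nat \<Rightarrow> real" and g :: "real \<Rightarrow> real" and P :: "real set"
    assume H: "T \<ge> 10 \<and> l < r \<and> finite P \<and> P \<subseteq> {l<..<r}
     \<and> P \<inter> {l + sqrt T .. r - sqrt T} \<noteq> {}
     \<and> g l = 0 \<and> g r = 0
     \<and> r - l \<le> b0 * T \<and> real (card P) \<le> b0 * T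
     \<and> (\<forall>x\<in>{l..r}. \<forall>y\<in>{l..r}. \<bar>g x - g y\<bar> \<le> b1 * T * \<bar>x - y\<bar>)
     \<and> (\<forall>j\<in>{1..k-1}. am j - am (j+1) \<ge> lam0 * sqrt T \<and> ap j - ap (j+1) \<ge> lam0 * sqrt T)
     \<and> am k - g l \<ge> lam1 * T \<and> ap k - g r \<ge> lam1 * T
     \<and> am 1 - g l \<le> b2 * T ^ 2 \<and> ap 1 - g r \<le> b2 * T ^ 2"
    interpret ctx k b0 b1 b2 lam0 lam1 \<mu> T l r am ap g P
      using H assms by unfold_locales auto
    have b: "P_cond k l r am ap g S (G_event k \<mu> lam0 lam1 T g S) \<ge> ennreal (1/2 * exp (- (C3 * sT ^ 10)))"
      by (rule P_cond_bound)
    have e: "T powr (5/2) = sT ^ 10" using sT_props by simp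
    have s0: "sT ^ 10 \<ge> 0" using sT_props by simp
    have "inverse C * exp (- C * T powr (5/2)) \<le> 1/2 * exp (- (C3 * sT ^ 10))"
    proof (rule mult_mono)
      show "inverse C \<le> 1/2" unfolding C_def using C3g_nn by (simp add: inverse_le_iff_le field_simps)
      have "C3 * sT ^ 10 \<le> C * sT ^ 10" unfolding C_def C3_eq using s0 by (intro mult_right_mono) auto
      then show "exp (- C * T powr (5/2)) \<le> exp (- (C3 * sT ^ 10))" unfolding e by simp
    qed auto
    then have "ennreal (inverse C * exp (- C * T powr (5/2))) \<le> ennreal (1/2 * exp (- (C3 * sT ^ 10)))"
      by (rule ennreal_leI)
    also have "\<dots> \<le> P_cond k l r am ap g S (G_event k \<mu> lam0 lam1 T g S)" by (rule b)
    finally show "P_cond k l r am ap g (P \<inter> {l + sqrt T .. r - sqrt T})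
            (G_event k \<mu> lam0 lam1 T g (P \<inter> {l + sqrt T .. r - sqrt T}))
         \<ge> ennreal (inverse C * exp (- C * T powr (5/2)))" unfolding S_def .
  qed
qed

end
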